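(* Let $q$ be a prime power and let $C\subseteq \mathrm{GF}(q^m)^n$ be a (linear or nonlinear) code with $n\le m$, $|C|=q^{mk}$ for an integer $1\le k\le n$, and minimum rank distance $d_{\mathrm R}=n-k+1$. Let $r=n-k$ and $t=\lfloor (d_{\mathrm R}-1)/2\rfloor$. Then for every transmitted codeword $\mathbf c\in C$ and every integer $u$ with $d_{\mathrm R}-t\le u\le n$, the decoder error probability of the bounded rank distance decoder satisfies $$P_E(t;u)<\frac{q^{-t^2}}{K_q^{2}},\qquad\text{where } K_q=\prod_{j=1}^{\infty}(1-q^{-j}).$$
   Context: For $\mathbf x=(x_0,\dots,x_{n-1})\in\mathrm{GF}(q^m)^n$, the rank $\mathrm{rk}(\mathbf x)$ is the dimension over $\mathrm{GF}(q)$ of the $\mathrm{GF}(q)$-span of $x_0,\dots,x_{n-1}$ (equivalently, the rank of the $m\times n$ matrix over $\mathrm{GF}(q)$ obtained by expanding each coordinate in a fixed basis of $\mathrm{GF}(q^m)$ over $\mathrm{GF}(q)$). The rank distance is $d(\mathbf x,\mathbf y)=\mathrm{rk}(\mathbf x-\mathbf y)$, and the minimum rank distance of $C$ is the minimum of $\mathrm{rk}(\mathbf c-\mathbf d)$ over distinct $\mathbf c,\mathbf d\in C$. A codeword $\mathbf c$ is transmitted and $\mathbf y=\mathbf c+\mathbf e$ is received. The bounded rank distance decoder outputs the codeword $\mathbf c'\in C$ with $\mathrm{rk}(\mathbf y-\mathbf c')\le t$ if one exists (it is then unique), and declares a decoder failure otherwise. A decoder error occurs when it outputs a codeword $\mathbf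 c'\neq\mathbf c$. For $0\le u\le n$, $P_E(t;u)$ is the probability of decoder error when the error $\mathbf e$ is uniformly distributed over the set of vectors of $\mathrm{GF}(q^m)^n$ of rank exactly $u$. *)

theory Defs
  imports "HOL-Analysis.Analysis" "HOL-Number_Theory.Prime_Powers"
begin

text \<open>Vectors of length n over a field: functions nat => 'a vanishing outside {..<n}.
  Addition and subtraction are pointwise.\<close>
definition vecs :: "nat \<Rightarrow> (nat \<Rightarrow> 'a::zero) set" where
  "vecs n = {x. \<forall>i\<ge>n. x i = 0}"

definition is_subfield :: "'a::field set \<Rightarrow> bool" where
  "is_subfield F \<longleftrightarrow> 0 \<in> F \<and> 1 \<in> F \<and> (\<forall>a\<in>F. \<forall>b\<in>F. a + b \<in> F \<and> a * b \<in> F)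
     \<and> (\<forall>a\<in>F. - a \<in> F) \<and> (\<forall>a\<in>F. a \<noteq> 0 \<longrightarrow> inverse a \<in> F)"

definition lin_indep_over :: "'a::field set \<Rightarrow> (nat \<Rightarrow> 'a) \<Rightarrow> nat set \<Rightarrow> bool" where
  "lin_indep_over F x S \<longleftrightarrow>
     (\<forall>c. (\<forall>i\<in>S. c i \<in> F) \<and> (\<Sum>i\<in>S. c i * x i) = 0 \<longrightarrow> (\<forall>i\<in>S. c i = 0))"

text \<open>Rank over F of (x_0,...,x_{n-1}): dimension of the F-span of the coordinates,
  i.e. the maximal number of F-linearly independent coordinates.\<close>
definition rk :: "'a::field set \<Rightarrow> nat \<Rightarrow> (nat \<Rightarrow> 'a) \<Rightarrow> nat" where
  "rk F n x = Max {card S | S. S \<subseteq> {..<n} \<and> lin_indep_over F x S}"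

definition min_rank_dist :: "'a::field set \<Rightarrow> nat \<Rightarrow> (nat \<Rightarrow> 'a) set \<Rightarrow> nat" where
  "min_rank_dist F n C = Min {rk F n (\<lambda>i. c i - d i) | c d. c \<in> C \<and> d \<in> C \<and> c \<noteq> d}"

text \<open>Decoder error for transmitted c and error e: the bounded rank distance decoder
  (radius t) outputs a codeword c' different from c, i.e. some c' \<noteq> c lies within
  rank distance t of the received word c + e.\<close>
definition decoder_error :: "'a::field set \<Rightarrow> nat \<Rightarrow> (nat \<Rightarrow> 'a) set \<Rightarrow> nat \<Rightarrow> (nat \<Rightarrow> 'a) \<Rightarrow> (nat \<Rightarrow> 'a) \<Rightarrow> bool" where
  "decoder_error F n C t c e \<longleftrightarrow> (\<exists>c'\<in>C. c' \<noteq> c \<and> rk F n (\<lambda>i. (c i + e i) - c' i) \<le> t)"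

text \<open>P_E(t;u): probability of decoder error, error uniform over vectors of rank exactly u.\<close>
definition PE :: "'a::field set \<Rightarrow> nat \<Rightarrow> (nat \<Rightarrow> 'a) set \<Rightarrow> (nat \<Rightarrow> 'a) \<Rightarrow> nat \<Rightarrow> nat \<Rightarrow> real" where
  "PE F n C c t u =
     real (card {e \<in> vecs n. rk F n e = u \<and> decoder_error F n C t c e})
     / real (card {e \<in> vecs n. rk F n e = u})"

definition Kq :: "nat \<Rightarrow> real" where
  "Kq q = (\<Prod>j. 1 - 1 / real q ^ Suc j)"

end

theory Submission
  imports Defs "HOL-Library.Function_Algebras"
begin

lemma card_funs:
  assumes "finite I"
  shows "card {w. (\<forall>j\<in>I. w j \<in> A) \<and> (\<forall>j. j \<notin> I \<longrightarrow> w j = w0 j)} = card A ^ card I"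
proof -
  have "bij_betw (\<lambda>w. restrict w I) {w. (\<forall>j\<in>I. w j \<in> A) \<and> (\<forall>j. j \<notin> I \<longrightarrow> w j = w0 j)} (PiE I (\<lambda>_. A))"
  proof (rule bij_betwI[where g = "\<lambda>f j. if j \<in> I then f j else w0 j"])
    show "(\<lambda>w. restrict w I) \<in> {w. (\<forall>j\<in>I. w j \<in> A) \<and> (\<forall>j. j \<notin> I \<longrightarrow> w j = w0 j)} \<rightarrow> PiE I (\<lambda>_. A)"
      by auto
    show "(\<lambda>f j. if j \<in> I then f j else w0 j) \<in> PiE I (\<lambda>_. A) \<rightarrow> {w. (\<forall>j\<in>I. w j \<in> A) \<and> (\<forall>j. j \<notin> I \<longrightarrow> w j = w0 j)}"
      by auto
    show "\<And>x. x \<in> {w. (\<forall>j\<in>I. w j \<in> A) \<and> (\<forall>j. j \<notin> I \<longrightarrow> w j = w0 j)} \<Longrightarrow> (\<lambda>j. if j \<in> I then restrict x I j else w0 j) = x"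
      by auto
    show "\<And>y. y \<in> PiE I (\<lambda>_. A) \<Longrightarrow> restrict (\<lambda>j. if j \<in> I then y j else w0 j) I = y"
      by (auto simp: PiE_def extensional_def restrict_def)
  qed
  then have "card {w. (\<forall>j\<in>I. w j \<in> A) \<and> (\<forall>j. j \<notin> I \<longrightarrow> w j = w0 j)} = card (PiE I (\<lambda>_. A))"
    by (rule bij_betw_same_card)
  also have "\<dots> = card A ^ card I" using assms by (simp add: card_PiE)
  finally show ?thesis .
qed

lemma finite_funs:
  assumes "finite I" "finite A"
  shows "finite {w. (\<forall>j\<in>I. w j \<in> A) \<and> (\<forall>j. j \<notin> I \<longrightarrow> w j = w0 j)}"
proof -
  have "{w. (\<forall>j\<in>I. w j \<in> A) \<and> (\<forall>j. j \<notin> I \<longrightarrow> w j = w0 j)} \<subseteq> (\<lambda>f j. if j \<in> I then f j else w0 j) ` PiE I (\<lambda>_. A)"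
  proof
    fix w assume w: "w \<in> {w. (\<forall>j\<in>I. w j \<in> A) \<and> (\<forall>j. j \<notin> I \<longrightarrow> w j = w0 j)}"
    then have "w = (\<lambda>j. if j \<in> I then restrict w I j else w0 j)" by auto
    moreover have "restrict w I \<in> PiE I (\<lambda>_. A)" using w by auto
    ultimately show "w \<in> (\<lambda>f j. if j \<in> I then f j else w0 j) ` PiE I (\<lambda>_. A)" by blast
  qed
  moreover have "finite (PiE I (\<lambda>_. A))" using assms by (simp add: finite_PiE)
  ultimately show ?thesis using finite_subset by blast
qed

lemma card_fibers:
  assumes "finite A" "\<And>y. y \<in> f ` A \<Longrightarrow> card {a\<in>A. f a = y} = k"
  shows "card A = card (f ` A) * k"
proof -
  have "A = (\<Union>y\<in>f ` A. {a\<in>A. f a = y})" by auto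
  then have "card A = card (\<Union>y\<in>f ` A. {a\<in>A. f a = y})" by simp
  also have "\<dots> = (\<Sum>y\<in>f ` A. card {a\<in>A. f a = y})"
    by (rule card_UN_disjoint) (use assms in auto)
  also have "\<dots> = (\<Sum>y\<in>f ` A. k)" using assms(2) by simp
  finally show ?thesis by simp
qed

lemma sum_fun_apply: "(\<Sum>i\<in>S. (f i :: 'b \<Rightarrow> 'c::comm_monoid_add)) j = (\<Sum>i\<in>S. f i j)"
  by (induct S rule: infinite_finite_induct) auto

lemma subfield_props:
  assumes "is_subfield F"
  shows "0 \<in> F" "1 \<in> F" "a \<in> F \<Longrightarrow> b \<in> F \<Longrightarrow> a + b \<in> F" "a \<in> F \<Longrightarrow> b \<in> F \<Longrightarrow> a * b \<in> F"
    "a \<in> F \<Longrightarrow> - a \<in> F" "a \<in> F \<Longrightarrow> inverse a \<in> F" "a \<in> F \<Longrightarrow> b \<in> F \<Longrightarrow> a - b \<in> F"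
proof -
  have A: "0 \<in> F" "1 \<in> F" "\<And>a b. a \<in> F \<Longrightarrow> b \<in> F \<Longrightarrow> a + b \<in> F"
    "\<And>a b. a \<in> F \<Longrightarrow> b \<in> F \<Longrightarrow> a * b \<in> F"
    "\<And>a. a \<in> F \<Longrightarrow> - a \<in> F" "\<And>a. a \<in> F \<Longrightarrow> a \<noteq> 0 \<Longrightarrow> inverse a \<in> F"
    using assms unfolding is_subfield_def by auto
  show "0 \<in> F" "1 \<in> F" by (fact A)+
  show "a \<in> F \<Longrightarrow> b \<in> F \<Longrightarrow> a + b \<in> F" "a \<in> F \<Longrightarrow> b \<in> F \<Longrightarrow> a * b \<in> F"
    "a \<in> F \<Longrightarrow> - a \<in> F" by (fact A)+
  show "a \<in> F \<Longrightarrow> inverse a \<in> F" using A(1,6) by (cases "a = 0") auto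
  show "a \<in> F \<Longrightarrow> b \<in> F \<Longrightarrow> a - b \<in> F" using A(3)[of a "-b"] A(5)[of b]
    by simp
qed

locale fsp =
  fixes F :: "'a::field set" and sm :: "'a \<Rightarrow> 'v::ab_group_add \<Rightarrow> 'v"
  assumes subf: "is_subfield F" and finF: "finite F"
  and sm_distr1: "sm (a + b) v = sm a v + sm b v"
  and sm_distr2: "sm a (v + w) = sm a v + sm a w"
  and sm_assoc: "sm (a * b) v = sm a (sm b v)"
  and sm_one: "sm 1 v = v"
begin

lemmas Fp = subfield_props[OF subf]

lemma sm_zero1[simp]: "sm 0 v = 0"
  using sm_distr1[of 0 0 v] by simp

lemma sm_zero2[simp]: "sm a 0 = 0"
  using sm_distr2[of a 0 0] by simp

lemma sm_neg1: "sm (- a) v = - sm a v"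
proof -
  have "sm a v + sm (-a) v = 0" using sm_distr1[of a "-a" v] by simp
  then show ?thesis by (metis minus_unique)
qed

lemma sm_neg2: "sm a (- v) = - sm a v"
proof -
  have "sm a v + sm a (-v) = 0" using sm_distr2[of a v "-v"] by simp
  then show ?thesis by (metis minus_unique)
qed

lemma sm_diff1: "sm (a - b) v = sm a v - sm b v"
  unfolding diff_conv_add_uminus by (simp only: sm_distr1 sm_neg1)

lemma sm_diff2: "sm a (v - w) = sm a v - sm a w"
  unfolding diff_conv_add_uminus by (simp only: sm_distr2 sm_neg2)

lemma sm_sum: "sm a (\<Sum>i\<in>S. f i) = (\<Sum>i\<in>S. sm a (f i))"
  by (induct S rule: infinite_finite_induct) (simp_all add: sm_distr2)

lemma card_F_ge2: "card F \<ge> 2"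
proof -
  have "{0, 1} \<subseteq> F" using Fp by auto
  then have "card {0::'a, 1} \<le> card F" using finF by (rule card_mono[rotated])
  then show ?thesis by simp
qed

definition lc :: "(nat \<Rightarrow> 'v) \<Rightarrow> (nat \<Rightarrow> 'a) \<Rightarrow> nat set \<Rightarrow> 'v" where
  "lc g c S = (\<Sum>i\<in>S. sm (c i) (g i))"

definition spn :: "(nat \<Rightarrow> 'v) \<Rightarrow> nat set \<Rightarrow> 'v set" where
  "spn g S = {lc g c S | c. \<forall>i\<in>S. c i \<in> F}"

definition ind :: "(nat \<Rightarrow> 'v) \<Rightarrow> nat set \<Rightarrow> bool" where
  "ind g S \<longleftrightarrow> (\<forall>c. (\<forall>i\<in>S. c i \<in> F) \<longrightarrow> lc g c S = 0 \<longrightarrow> (\<forall>i\<in>S. c i = 0))"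

definition subsp :: "'v set \<Rightarrow> bool" where
  "subsp U \<longleftrightarrow> 0 \<in> U \<and> (\<forall>x\<in>U. \<forall>y\<in>U. x + y \<in> U) \<and> (\<forall>a\<in>F. \<forall>x\<in>U. sm a x \<in> U)"

definition tup :: "'v set \<Rightarrow> nat \<Rightarrow> (nat \<Rightarrow> 'v) set" where
  "tup U l = {g. (\<forall>i<l. g i \<in> U) \<and> (\<forall>i\<ge>l. g i = 0) \<and> ind g {..<l}}"

lemma in_spnI: "(\<And>i. i \<in> S \<Longrightarrow> c i \<in> F) \<Longrightarrow> lc g c S \<in> spn g S"
  unfolding spn_def by blast

lemma indD: "ind g S \<Longrightarrow> (\<And>i. i \<in> S \<Longrightarrow> c i \<in> F) \<Longrightarrow> lc g c S = 0 \<Longrightarrow> i \<in> S \<Longrightarrow> c i = 0"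
  unfolding ind_def by blast

lemma lc_add: "lc g c S + lc g d S = lc g (\<lambda>i. c i + d i) S"
  by (simp add: lc_def sum.distrib sm_distr1)

lemma lc_diff: "lc g c S - lc g d S = lc g (\<lambda>i. c i - d i) S"
  by (simp add: lc_def sum_subtractf sm_diff1)

lemma lc_sm: "sm a (lc g c S) = lc g (\<lambda>i. a * c i) S"
  by (simp add: lc_def sm_sum sm_assoc)

lemma lc_cong: "(\<And>i. i \<in> S \<Longrightarrow> c i = d i) \<Longrightarrow> (\<And>i. i \<in> S \<Longrightarrow> g i = h i) \<Longrightarrow> lc g c S = lc h d S"
  unfolding lc_def by (rule sum.cong) auto

lemma lc_zero: "(\<And>i. i \<in> S \<Longrightarrow> c i = 0) \<Longrightarrow> lc g c S = 0"
  unfolding lc_def by (rule sum.neutral) auto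

lemma lc_insert: "finite S \<Longrightarrow> j \<notin> S \<Longrightarrow> lc g c (insert j S) = sm (c j) (g j) + lc g c S"
  by (simp add: lc_def)

lemma lc_mono_zero: "finite T \<Longrightarrow> S \<subseteq> T \<Longrightarrow> (\<And>i. i \<in> T - S \<Longrightarrow> c i = 0) \<Longrightarrow> lc g c T = lc g c S"
  unfolding lc_def by (rule sum.mono_neutral_right) auto

lemma spn_cong: "(\<And>i. i \<in> S \<Longrightarrow> g i = h i) \<Longrightarrow> spn g S = spn h S"
  unfolding spn_def using lc_cong[of S _ _ g h] by metis

lemma ind_cong: "(\<And>i. i \<in> S \<Longrightarrow> g i = h i) \<Longrightarrow> ind g S = ind h S"
  unfolding ind_def using lc_cong[of S _ _ g h] by metis

lemma subsp_neg: "subsp U \<Longrightarrow> x \<in> U \<Longrightarrow> - x \<in> U"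
  unfolding subsp_def using sm_neg1[of 1 x] Fp(2,5) by (metis sm_one)

lemma subsp_diff: "subsp U \<Longrightarrow> x \<in> U \<Longrightarrow> y \<in> U \<Longrightarrow> x - y \<in> U"
  using subsp_neg[of U y] unfolding subsp_def by (metis diff_conv_add_uminus)

lemma subsp_sum: "subsp U \<Longrightarrow> (\<And>i. i \<in> S \<Longrightarrow> f i \<in> U) \<Longrightarrow> (\<Sum>i\<in>S. f i) \<in> U"
  by (induct S rule: infinite_finite_induct) (auto simp: subsp_def)

lemma subsp_lc: "subsp U \<Longrightarrow> (\<And>i. i \<in> S \<Longrightarrow> c i \<in> F) \<Longrightarrow> (\<And>i. i \<in> S \<Longrightarrow> g i \<in> U) \<Longrightarrow> lc g c S \<in> U"
  unfolding lc_def by (rule subsp_sum) (auto simp: subsp_def)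

lemma spn_subsp: "subsp (spn g S)"
  unfolding subsp_def
proof (intro conjI ballI)
  show "0 \<in> spn g S" unfolding spn_def using lc_zero[of S "\<lambda>_. 0" g] Fp(1) by force
  fix x y assume "x \<in> spn g S" "y \<in> spn g S"
  then obtain c d where "x = lc g c S" "\<forall>i\<in>S. c i \<in> F" "y = lc g d S" "\<forall>i\<in>S. d i \<in> F"
    unfolding spn_def by blast
  then show "x + y \<in> spn g S" unfolding spn_def using lc_add Fp(3) by fastforce
next
  fix a x assume "a \<in> F" "x \<in> spn g S"
  then obtain c where "x = lc g c S" "\<forall>i\<in>S. c i \<in> F" unfolding spn_def by blast
  then show "sm a x \<in> spn g S" unfolding spn_def using lc_sm \<open>a \<in> F\<close> Fp(4) by fastforce
qed

lemma spn_sub: "subsp U \<Longrightarrow> (\<And>i. i \<in> S \<Longrightarrow> g i \<in> U) \<Longrightarrow> spn g S \<subseteq> U"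
  unfolding spn_def using subsp_lc by blast

lemma gen_in_spn: "finite S \<Longrightarrow> i \<in> S \<Longrightarrow> g i \<in> spn g S"
proof -
  assume S: "finite S" "i \<in> S"
  have "lc g (\<lambda>j. if j = i then 1 else 0) S = (\<Sum>j\<in>S. if j = i then g j else 0)"
    unfolding lc_def by (rule sum.cong) (auto simp: sm_one)
  also have "\<dots> = g i" using S by simp
  moreover have "lc g (\<lambda>j. if j = i then 1 else 0) S \<in> spn g S" by (rule in_spnI) (use Fp in auto)
  ultimately show ?thesis by simp
qed

lemma card_spn:
  assumes S: "finite S" and ind: "ind g S"
  shows "card (spn g S) = card F ^ card S"
proof -
  let ?D = "{c. (\<forall>j\<in>S. c j \<in> F) \<and> (\<forall>j. j \<notin> S \<longrightarrow> c j = (\<lambda>_. 0) j)}"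
  have "bij_betw (\<lambda>c. lc g c S) ?D (spn g S)"
    unfolding bij_betw_def
  proof
    show "inj_on (\<lambda>c. lc g c S) ?D"
    proof (rule inj_onI)
      fix c d assume c: "c \<in> ?D" and d: "d \<in> ?D" and eq: "lc g c S = lc g d S"
      then have "lc g (\<lambda>i. c i - d i) S = 0" using lc_diff[of g c S d] by simp
      moreover have "\<forall>i\<in>S. c i - d i \<in> F" using c d Fp(7) by auto
      ultimately have "\<forall>i\<in>S. c i - d i = 0" using indD[OF ind, of "\<lambda>i. c i - d i"] by blast
      then show "c = d" using c d by (auto intro!: ext)
    qed
    show "(\<lambda>c. lc g c S) ` ?D = spn g S"
    proof
      show "(\<lambda>c. lc g c S) ` ?D \<subseteq> spn g S" unfolding spn_def by auto
      show "spn g S \<subseteq> (\<lambda>c. lc g c S) ` ?D"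
      proof
        fix x assume "x \<in> spn g S"
        then obtain c where c: "x = lc g c S" "\<forall>i\<in>S. c i \<in> F" unfolding spn_def by blast
        let ?c = "\<lambda>j. if j \<in> S then c j else 0"
        have "x = lc g ?c S" using c by (auto intro: lc_cong)
        moreover have "?c \<in> ?D" using c by auto
        ultimately show "x \<in> (\<lambda>c. lc g c S) ` ?D" by blast
      qed
    qed
  qed
  then have "card (spn g S) = card ?D" by (simp add: bij_betw_same_card)
  also have "\<dots> = card F ^ card S" using S by (rule card_funs)
  finally show ?thesis .
qed

lemma ind_insert:
  assumes S: "finite S" and ind: "ind g S" and j: "j \<notin> S" and nsp: "g j \<notin> spn g S"
  shows "ind g (insert j S)"
  unfolding ind_def
proof (intro allI impI)
  fix c assume cF: "\<forall>i\<in>insert j S. c i \<in> F" and z: "lc g c (insert j S) = 0"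
  then have z': "sm (c j) (g j) + lc g c S = 0" using lc_insert[OF S j] by simp
  have cj: "c j = 0"
  proof (rule ccontr)
    assume cj: "c j \<noteq> 0"
    have "lc g c S = - sm (c j) (g j)" using z' by (metis minus_unique)
    then have "sm (- inverse (c j)) (lc g c S) = sm (- inverse (c j)) (- sm (c j) (g j))"
      by simp
    also have "\<dots> = sm (inverse (c j) * c j) (g j)"
      by (simp add: sm_neg1 sm_neg2 sm_assoc)
    also have "\<dots> = g j" using cj by (simp add: sm_one)
    finally have "g j = lc g (\<lambda>i. - inverse (c j) * c i) S" by (simp add: lc_sm)
    moreover have "\<forall>i\<in>S. - inverse (c j) * c i \<in> F" using cF Fp by auto
    ultimately have "g j \<in> spn g S" unfolding spn_def by blast
    then show False using nsp by blast
  qed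
  then have "lc g c S = 0" using z' by simp
  then have "\<forall>i\<in>S. c i = 0" using ind cF unfolding ind_def by blast
  then show "\<forall>i\<in>insert j S. c i = 0" using cj by blast
qed

lemma ind_mono:
  assumes T: "finite T" and ind: "ind g T" and sub: "S \<subseteq> T"
  shows "ind g S"
  unfolding ind_def
proof (intro allI impI)
  fix c assume cF: "\<forall>i\<in>S. c i \<in> F" and z: "lc g c S = 0"
  let ?c = "\<lambda>i. if i \<in> S then c i else 0"
  have "lc g ?c T = lc g ?c S" by (rule lc_mono_zero[OF T sub]) auto
  also have "\<dots> = lc g c S" by (rule lc_cong) auto
  finally have "lc g ?c T = 0" using z by simp
  moreover have "\<And>i. i \<in> T \<Longrightarrow> ?c i \<in> F" using cF Fp(1) by auto
  ultimately have "\<And>i. i \<in> T \<Longrightarrow> ?c i = 0" using indD[OF ind, of ?c] by blast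
  then show "\<forall>i\<in>S. c i = 0" using sub by (metis subsetD)
qed

lemma ind_last:
  assumes ind: "ind g {..<Suc l}"
  shows "g l \<notin> spn g {..<l}"
proof
  assume "g l \<in> spn g {..<l}"
  then obtain c where c: "g l = lc g c {..<l}" "\<forall>i\<in>{..<l}. c i \<in> F" unfolding spn_def by blast
  define c' where "c' = (\<lambda>a. if a = l then -1 else c a)"
  have "lc g c' {..<Suc l} = sm (c' l) (g l) + lc g c' {..<l}"
    using lc_insert[of "{..<l}" l g c'] by (simp add: lessThan_Suc)
  also have "lc g c' {..<l} = lc g c {..<l}" by (rule lc_cong) (auto simp: c'_def)
  finally have "lc g c' {..<Suc l} = 0" using c by (simp add: sm_neg1 sm_one c'_def)
  moreover have "\<And>i. i\<in>{..<Suc l} \<Longrightarrow> c' i \<in> F" using c Fp by (auto simp: c'_def)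
  ultimately have "c' l = 0" using indD[OF ind, of c'] by blast
  then show False by (simp add: c'_def)
qed

lemma tup_extend:
  assumes g: "g \<in> tup U l" and v: "v \<in> U" "v \<notin> spn g {..<l}"
  shows "g(l := v) \<in> tup U (Suc l)"
proof -
  have ind: "ind g {..<l}" using g by (simp add: tup_def)
  have "ind (g(l:=v)) {..<l}" using ind by (subst ind_cong[of _ _ g]) auto
  moreover have "spn (g(l:=v)) {..<l} = spn g {..<l}" by (rule spn_cong) auto
  ultimately have "ind (g(l:=v)) (insert l {..<l})"
    using v by (intro ind_insert) auto
  then show ?thesis using g v by (auto simp: tup_def lessThan_Suc)
qed

lemma tup_restrict:
  assumes h: "h \<in> tup U (Suc l)"
  shows "h(l := 0) \<in> tup U l" "h l \<in> U" "h l \<notin> spn (h(l:=0)) {..<l}"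
proof -
  have ind: "ind h {..<Suc l}" using h by (simp add: tup_def)
  have "ind h {..<l}" by (rule ind_mono[OF _ ind]) auto
  then have "ind (h(l:=0)) {..<l}" by (subst ind_cong[of _ _ h]) auto
  then show "h(l := 0) \<in> tup U l" using h by (auto simp: tup_def)
  show "h l \<in> U" using h by (auto simp: tup_def)
  have "spn (h(l:=0)) {..<l} = spn h {..<l}" by (rule spn_cong) auto
  then show "h l \<notin> spn (h(l:=0)) {..<l}" using ind_last[OF ind] by simp
qed

lemma tup_finite: "finite U \<Longrightarrow> finite (tup U l)"
proof -
  assume U: "finite U"
  have "tup U l \<subseteq> {w. (\<forall>j\<in>{..<l}. w j \<in> U) \<and> (\<forall>j. j \<notin> {..<l} \<longrightarrow> w j = (\<lambda>_. 0) j)}"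
    by (auto simp: tup_def)
  then show ?thesis using finite_funs[of "{..<l}" U "\<lambda>_. 0"] U finite_subset by blast
qed

lemma card_tup:
  assumes U: "subsp U" "finite U"
  shows "card (tup U l) = (\<Prod>i<l. card U - card F ^ i)"
proof (induct l)
  case 0
  have "tup U 0 = {\<lambda>_. 0}" by (auto simp: tup_def ind_def)
  then show ?case by simp
next
  case (Suc l)
  have bij: "bij_betw (\<lambda>(g,v). g(l:=v)) (SIGMA g:tup U l. U - spn g {..<l}) (tup U (Suc l))"
    unfolding bij_betw_def
  proof
    show "inj_on (\<lambda>(g,v). g(l:=v)) (SIGMA g:tup U l. U - spn g {..<l})"
    proof (rule inj_onI, clarify)
      fix g v g' v' assume g: "g \<in> tup U l" "g' \<in> tup U l" and eq: "g(l := v) = g'(l := v')"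
      have "v = v'" using fun_cong[OF eq, of l] by simp
      moreover have "g = g'"
      proof
        fix i show "g i = g' i"
          using fun_cong[OF eq, of i] g by (cases "i = l") (auto simp: tup_def)
      qed
      ultimately show "g = g' \<and> v = v'" by simp
    qed
    show "(\<lambda>(g,v). g(l:=v)) ` (SIGMA g:tup U l. U - spn g {..<l}) = tup U (Suc l)"
    proof
      show "(\<lambda>(g,v). g(l:=v)) ` (SIGMA g:tup U l. U - spn g {..<l}) \<subseteq> tup U (Suc l)"
        using tup_extend by auto
      show "tup U (Suc l) \<subseteq> (\<lambda>(g,v). g(l:=v)) ` (SIGMA g:tup U l. U - spn g {..<l})"
      proof
        fix h assume h: "h \<in> tup U (Suc l)"
        have "h = (\<lambda>(g,v). g(l:=v)) (h(l:=0), h l)" by auto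
        moreover have "(h(l:=0), h l) \<in> (SIGMA g:tup U l. U - spn g {..<l})"
          using tup_restrict[OF h] by auto
        ultimately show "h \<in> (\<lambda>(g,v). g(l:=v)) ` (SIGMA g:tup U l. U - spn g {..<l})" by blast
      qed
    qed
  qed
  have "card (tup U (Suc l)) = card (SIGMA g:tup U l. U - spn g {..<l})"
    using bij by (simp add: bij_betw_same_card)
  also have "\<dots> = (\<Sum>g\<in>tup U l. card (U - spn g {..<l}))"
    using U by (intro card_SigmaI) (auto intro: tup_finite)
  also have "\<dots> = (\<Sum>g\<in>tup U l. card U - card F ^ l)"
  proof (rule sum.cong)
    fix g assume g: "g \<in> tup U l"
    have sub: "spn g {..<l} \<subseteq> U" using g U by (intro spn_sub) (auto simp: tup_def)
    have "card (spn g {..<l}) = card F ^ l" using g by (simp add: card_spn tup_def)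
    then show "card (U - spn g {..<l}) = card U - card F ^ l"
      using sub U by (simp add: card_Diff_subset finite_subset)
  qed simp
  also have "\<dots> = card (tup U l) * (card U - card F ^ l)" by simp
  finally show ?case using Suc by simp
qed

lemma spn_tup_sub: "subsp U \<Longrightarrow> g \<in> tup U l \<Longrightarrow> spn g {..<l} \<subseteq> U"
  by (rule spn_sub) (auto simp: tup_def)

lemma card_spn_tup: "g \<in> tup U l \<Longrightarrow> card (spn g {..<l}) = card F ^ l"
  by (simp add: card_spn tup_def)

lemma pow_lt_mono: "card F ^ a < card F ^ b \<longleftrightarrow> a < b"
  using card_F_ge2 by (simp add: power_strict_increasing_iff)

lemma pow_le_mono: "card F ^ a \<le> card F ^ b \<longleftrightarrow> a \<le> b"
  using card_F_ge2 by (simp add: power_increasing_iff)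

lemma pow_inj: "card F ^ a = card F ^ b \<longleftrightarrow> a = b"
  using card_F_ge2 by (simp add: power_inject_exp)

lemma basis_exists:
  assumes U: "subsp U" "finite U"
  shows "\<exists>l g. g \<in> tup U l \<and> spn g {..<l} = U \<and> card U = card F ^ l"
proof -
  let ?L = "{l. tup U l \<noteq> {}}"
  have "(\<lambda>_. 0) \<in> tup U 0" by (auto simp: tup_def ind_def)
  then have L0: "0 \<in> ?L" by blast
  have bnd: "l < card U" if lL: "l \<in> ?L" for l
  proof -
    obtain g where g: "g \<in> tup U l" using lL by blast
    have "card F ^ l \<le> card U" using card_spn_tup[OF g] spn_tup_sub[OF U(1) g] U(2)
      by (metis card_mono)
    moreover have "l < 2 ^ l" by simp
    moreover have "2 ^ l \<le> card F ^ l" using card_F_ge2 by (simp add: power_mono)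
    ultimately show ?thesis by linarith
  qed
  have finL: "finite ?L" using bnd by (meson bounded_nat_set_is_finite)
  define l where "l = Max ?L"
  have lL: "l \<in> ?L" unfolding l_def using finL L0 by (intro Max_in) auto
  then obtain g where g: "g \<in> tup U l" by blast
  have "spn g {..<l} = U"
  proof (rule ccontr)
    assume "spn g {..<l} \<noteq> U"
    then obtain v where "v \<in> U" "v \<notin> spn g {..<l}" using spn_tup_sub[OF U(1) g] by blast
    then have "g(l:=v) \<in> tup U (Suc l)" using g by (rule tup_extend[rotated])
    then have "Suc l \<in> ?L" by blast
    then have "Suc l \<le> l" unfolding l_def using finL by (simp add: Max_ge)
    then show False by simp
  qed
  then show ?thesis using g card_spn_tup[OF g] by auto
qed

lemma basis_extend:
  assumes U: "subsp U" "finite U" "card U = card F ^ d"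
    and g: "g \<in> tup U l" and ll: "l \<le> l'" "l' \<le> d"
  shows "\<exists>h \<in> tup U l'. \<forall>i<l. h i = g i"
  using ll
proof (induct l' rule: dec_induct)
  case base then show ?case using g by blast
next
  case (step m)
  then obtain h where h: "h \<in> tup U m" "\<forall>i<l. h i = g i" by auto
  have "card (spn h {..<m}) < card U" using card_spn_tup[OF h(1)] U(3) step pow_lt_mono by simp
  then have "spn h {..<m} \<noteq> U" by auto
  then obtain v where "v \<in> U" "v \<notin> spn h {..<m}" using spn_tup_sub[OF U(1) h(1)] by blast
  then have "h(m := v) \<in> tup U (Suc m)" using h by (intro tup_extend) auto
  moreover have "\<forall>i<l. (h(m:=v)) i = g i" using h step by auto
  ultimately show ?case by blast
qed

lemma spn_full:
  assumes U: "subsp U" "finite U" and g: "g \<in> tup U l" and c: "card U = card F ^ l"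
  shows "spn g {..<l} = U"
  using card_subset_eq[OF U(2) spn_tup_sub[OF U(1) g]] card_spn_tup[OF g] c by simp

end

definition Pq :: "nat \<Rightarrow> nat \<Rightarrow> real" where
  "Pq q L = (\<Prod>j<L. 1 - 1 / real q ^ Suc j)"

lemma Pq_pos: "q \<ge> 2 \<Longrightarrow> Pq q L > 0"
proof -
  assume q: "q \<ge> 2"
  have "1 / real q ^ Suc j < 1" for j
  proof -
    have "(1::real) < real q ^ Suc j" using q by (intro one_less_power) auto
    then show ?thesis by simp
  qed
  then show ?thesis unfolding Pq_def by (intro prod_pos) (auto simp: less_diff_eq)
qed

lemma Kq_facts:
  assumes q: "q \<ge> 2"
  shows "Kq q > 0" "Kq q < Pq q L"
proof -
  let ?f = "\<lambda>j. 1 - 1 / real q ^ Suc j"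
  have lt1: "1 / real q ^ Suc j < 1" for j
  proof -
    have "(1::real) < real q ^ Suc j" using q by (intro one_less_power) auto
    then show ?thesis by simp
  qed
  have pos: "?f j > 0" for j using lt1[of j] by simp
  have summ: "summable (\<lambda>j. norm (?f j - 1))"
  proof -
    have "summable (\<lambda>j. (1 / real q) ^ Suc j)"
      using q by (subst summable_Suc_iff) (simp add: summable_geometric)
    then show ?thesis by (simp add: power_one_over)
  qed
  have cp: "convergent_prod ?f"
    by (rule abs_convergent_prod_imp_convergent_prod[OF summable_imp_abs_convergent_prod[OF summ]])
  have K: "Kq q = prodinf ?f" unfolding Kq_def by simp
  have fnz: "?f i \<noteq> 0" for i using pos[of i] by linarith
  have nz: "Kq q \<noteq> 0" unfolding K by (rule prodinf_nonzero[OF cp fnz])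
  have lim: "(\<lambda>n. \<Prod>i\<le>n. ?f i) \<longlonglongrightarrow> Kq q" unfolding K by (rule convergent_prod_LIMSEQ[OF cp])
  have dec: "decseq (\<lambda>n. \<Prod>i\<le>n. ?f i)"
  proof (rule decseq_SucI)
    fix n
    have "(\<Prod>i\<le>Suc n. ?f i) = (\<Prod>i\<le>n. ?f i) * ?f (Suc n)" by simp
    also have "\<dots> \<le> (\<Prod>i\<le>n. ?f i)"
    proof -
      have "(\<Prod>i\<le>n. ?f i) \<ge> 0" using pos by (intro prod_nonneg) (auto intro: less_imp_le)
      moreover have "?f (Suc n) \<le> 1" by simp
      ultimately show ?thesis by (simp add: mult_left_le)
    qed
    finally show "(\<Prod>i\<le>Suc n. ?f i) \<le> (\<Prod>i\<le>n. ?f i)" .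
  qed
  have ge: "Kq q \<le> (\<Prod>i\<le>n. ?f i)" for n by (rule decseq_ge[OF dec lim])
  have pp: "0 \<le> (\<Prod>i\<le>n. ?f i)" for n by (rule prod_nonneg) (use pos less_imp_le in blast)
  have "Kq q \<ge> 0" by (rule LIMSEQ_le_const[OF lim]) (use pp in blast)
  then show "Kq q > 0" using nz by simp
  have "Kq q \<le> (\<Prod>i\<le>L. ?f i)" by (rule ge)
  also have "(\<Prod>i\<le>L. ?f i) = Pq q L * ?f L" unfolding Pq_def by (simp add: lessThan_Suc_atMost[symmetric])
  also have "\<dots> < Pq q L"
  proof -
    have "Pq q L > 0" using Pq_pos q by blast
    moreover have "?f L < 1" using q by simp
    ultimately show ?thesis by simp
  qed
  finally show "Kq q < Pq q L" .
qed

lemma prod_pow_diff: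
  assumes q: "q \<ge> 2"
  shows "(\<Prod>i<L. real q ^ L - real q ^ i) = real q ^ (L * L) * Pq q L"
proof -
  have "(\<Prod>i<L. real q ^ L - real q ^ i) = (\<Prod>i<L. real q ^ L * (1 - 1 / real q ^ (L - i)))"
  proof (rule prod.cong)
    fix i assume "i \<in> {..<L}"
    then have "real q ^ L = real q ^ i * real q ^ (L - i)" by (simp add: power_add[symmetric])
    then show "real q ^ L - real q ^ i = real q ^ L * (1 - 1 / real q ^ (L - i))"
      using q by (simp add: field_simps)
  qed simp
  also have "\<dots> = real q ^ (L * L) * (\<Prod>i<L. 1 - 1 / real q ^ (L - i))"
    by (simp add: prod.distrib power_mult)
  also have "(\<Prod>i<L. 1 - 1 / real q ^ (L - i)) = Pq q L"
    unfolding Pq_def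
    apply (rule prod.reindex_bij_witness[where i = "\<lambda>j. L - Suc j" and j = "\<lambda>i. L - Suc i"])
    apply auto
    by (metis Suc_diff_Suc power_Suc)
  finally show ?thesis .
qed

lemma prod_pow_diff_ge:
  assumes q: "q \<ge> 2" and u: "u \<le> m"
  shows "(\<Prod>i<u. real q ^ m - real q ^ i) \<ge> real q ^ (m * u) * Pq q m"
proof -
  have "(\<Prod>i<u. real q ^ m - real q ^ i) = (\<Prod>i<u. real q ^ m * (1 - 1 / real q ^ (m - i)))"
  proof (rule prod.cong)
    fix i assume "i \<in> {..<u}"
    then have "real q ^ m = real q ^ i * real q ^ (m - i)" using u by (simp add: power_add[symmetric])
    then show "real q ^ m - real q ^ i = real q ^ m * (1 - 1 / real q ^ (m - i))"
      using q by (simp add: field_simps)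
  qed simp
  also have "\<dots> = real q ^ (m * u) * (\<Prod>i<u. 1 - 1 / real q ^ (m - i))"
    by (simp add: prod.distrib power_mult)
  finally have eq: "(\<Prod>i<u. real q ^ m - real q ^ i) = real q ^ (m * u) * (\<Prod>i<u. 1 - 1 / real q ^ (m - i))" .
  have fpos: "0 \<le> 1 - 1 / real q ^ j" "1 - 1 / real q ^ j \<le> 1" for j
    using q by (auto simp: field_simps)
  have "Pq q m = (\<Prod>i<m. 1 - 1 / real q ^ (m - i))"
    unfolding Pq_def
    by (rule prod.reindex_bij_witness[where i = "\<lambda>j. m - Suc j" and j = "\<lambda>i. m - Suc i"]) auto
  also have "\<dots> = (\<Prod>i<u. 1 - 1 / real q ^ (m - i)) * (\<Prod>i\<in>{u..<m}. 1 - 1 / real q ^ (m - i))"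
  proof -
    let ?g = "\<lambda>i. 1 - 1 / real q ^ (m - i)"
    have "(\<Prod>i\<in>{..<u} \<union> {u..<m}. ?g i) = (\<Prod>i<u. ?g i) * (\<Prod>i\<in>{u..<m}. ?g i)"
      by (rule prod.union_disjoint) auto
    moreover have "{..<u} \<union> {u..<m} = {..<m}" using u by auto
    ultimately show ?thesis by simp
  qed
  also have "\<dots> \<le> (\<Prod>i<u. 1 - 1 / real q ^ (m - i))"
  proof -
    have "(\<Prod>i\<in>{u..<m}. 1 - 1 / real q ^ (m - i)) \<le> 1" by (rule prod_le_1) (use fpos in auto)
    moreover have "(\<Prod>i<u. 1 - 1 / real q ^ (m - i)) \<ge> 0" by (rule prod_nonneg) (use fpos in auto)
    ultimately show ?thesis by (simp add: mult_left_le)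
  qed
  finally have "Pq q m \<le> (\<Prod>i<u. 1 - 1 / real q ^ (m - i))" .
  then show ?thesis unfolding eq using q by (simp add: mult_left_mono)
qed

locale setting =
  fixes F :: "'a::{field,finite} set" and n :: nat
  assumes subf: "is_subfield F"
begin

sublocale V: fsp F "(*) :: 'a \<Rightarrow> 'a \<Rightarrow> 'a"
  by unfold_locales (auto simp: subf algebra_simps)

sublocale W: fsp F "\<lambda>(c::'a) (f::nat \<Rightarrow> 'a). (\<lambda>i. c * f i)"
  by unfold_locales (auto simp: subf algebra_simps fun_eq_iff)

abbreviation q where "q \<equiv> card F"

abbreviation Vn :: "(nat \<Rightarrow> 'a) set" where "Vn \<equiv> vecs n"

definition Fn :: "(nat \<Rightarrow> 'a) set" where "Fn = {a. (\<forall>i<n. a i \<in> F) \<and> (\<forall>i\<ge>n. a i = 0)}"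
definition pr :: "(nat \<Rightarrow> 'a) \<Rightarrow> (nat \<Rightarrow> 'a) \<Rightarrow> 'a" where "pr x a = (\<Sum>i<n. a i * x i)"
definition kerF :: "(nat \<Rightarrow> 'a) \<Rightarrow> (nat \<Rightarrow> 'a) set" where "kerF x = {a \<in> Fn. pr x a = 0}"
definition phi :: "(nat \<Rightarrow> nat \<Rightarrow> 'a) \<Rightarrow> (nat \<Rightarrow> 'a) \<Rightarrow> (nat \<Rightarrow> 'a)" where
  "phi G e = (\<lambda>j. if j < n then pr e (G j) else 0)"

lemma Fn_eq: "Fn = {w. (\<forall>j\<in>{..<n}. w j \<in> F) \<and> (\<forall>j. j \<notin> {..<n} \<longrightarrow> w j = (\<lambda>_. 0) j)}"
  by (auto simp: Fn_def)

lemma card_Fn: "card Fn = q ^ n"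
  unfolding Fn_eq using card_funs[of "{..<n}" F "\<lambda>_. 0"] by simp

lemma finite_Fn: "finite Fn"
  unfolding Fn_eq by (rule finite_funs) auto

lemma vecs_eq: "Vn = {w. (\<forall>j\<in>{..<n}. w j \<in> UNIV) \<and> (\<forall>j. j \<notin> {..<n} \<longrightarrow> w j = (\<lambda>_. 0) j)}"
  by (auto simp: vecs_def)

lemma card_vecs: "card Vn = CARD('a) ^ n"
  unfolding vecs_eq using card_funs[of "{..<n}" "UNIV::'a set" "\<lambda>_. 0"] by simp

lemma finite_vecs: "finite Vn"
  unfolding vecs_eq by (rule finite_funs) auto

lemma vecs_diff: "x \<in> Vn \<Longrightarrow> y \<in> Vn \<Longrightarrow> x - y \<in> Vn"
  by (auto simp: vecs_def)

lemma vecs_add: "x \<in> Vn \<Longrightarrow> y \<in> Vn \<Longrightarrow> x + y \<in> Vn"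
  by (auto simp: vecs_def)

lemma Fn_subsp: "W.subsp Fn"
  unfolding W.subsp_def Fn_def using W.Fp by auto

lemma Fn_diff: "a \<in> Fn \<Longrightarrow> b \<in> Fn \<Longrightarrow> a - b \<in> Fn"
  using W.subsp_diff[OF Fn_subsp] by blast

lemma Fn_add: "a \<in> Fn \<Longrightarrow> b \<in> Fn \<Longrightarrow> a + b \<in> Fn"
  using Fn_subsp unfolding W.subsp_def by blast

lemma pr_add: "pr x (a + b) = pr x a + pr x b"
  by (simp add: pr_def algebra_simps sum.distrib)

lemma pr_sm: "pr x (\<lambda>i. c * a i) = c * pr x a"
  by (simp add: pr_def sum_distrib_left mult.assoc)

lemma pr_zero: "pr x 0 = 0"
  by (simp add: pr_def)

lemma pr_zerox: "pr 0 a = 0"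
  by (simp add: pr_def)

lemma pr_diff: "pr x (a - b) = pr x a - pr x b"
  by (simp add: pr_def algebra_simps sum_subtractf)

lemma pr_diffx: "pr (x - y) a = pr x a - pr y a"
  by (simp add: pr_def algebra_simps sum_subtractf)

lemma pr_addx: "pr (x + y) a = pr x a + pr y a"
  by (simp add: pr_def algebra_simps sum.distrib)

lemma lc_apply: "(W.lc g c S) j = (\<Sum>i\<in>S. c i * g i j)"
  unfolding W.lc_def by (simp add: sum_fun_apply)

lemma pr_lc: "pr x (W.lc g c S) = (\<Sum>i\<in>S. c i * pr x (g i))"
proof -
  have "pr x (W.lc g c S) = (\<Sum>j<n. (\<Sum>i\<in>S. c i * g i j) * x j)" by (simp add: pr_def lc_apply)
  also have "\<dots> = (\<Sum>j<n. \<Sum>i\<in>S. c i * (g i j * x j))" by (simp add: sum_distrib_right mult.assoc)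
  also have "\<dots> = (\<Sum>i\<in>S. \<Sum>j<n. c i * (g i j * x j))" by (rule sum.swap)
  also have "\<dots> = (\<Sum>i\<in>S. c i * pr x (g i))" by (simp add: pr_def sum_distrib_left)
  finally show ?thesis .
qed

lemma pr_spn_eq:
  assumes "\<And>j. j \<in> S \<Longrightarrow> pr x (g j) = pr y (g j)" "a \<in> W.spn g S"
  shows "pr x a = pr y a"
proof -
  obtain c where "a = W.lc g c S" using assms(2) unfolding W.spn_def by blast
  then show ?thesis using assms(1) by (simp add: pr_lc)
qed

lemma kerF_subsp: "W.subsp (kerF x)"
  using Fn_subsp unfolding W.subsp_def kerF_def by (auto simp: pr_add pr_sm pr_zero)

lemma kerF_sub: "kerF x \<subseteq> Fn"
  by (auto simp: kerF_def)

lemma finite_kerF: "finite (kerF x)"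
  using finite_Fn kerF_sub finite_subset by blast

lemma lin_indep_eq: "lin_indep_over F x S = V.ind x S"
  unfolding lin_indep_over_def V.ind_def V.lc_def by blast

lemma card_F2: "q \<ge> 2" by (rule W.card_F_ge2)

lemma rk_props: "rk F n x \<le> n" "card (kerF x) = q ^ (n - rk F n x)"
proof -
  define M where "M = {card S | S. S \<subseteq> {..<n} \<and> lin_indep_over F x S}"
  have Msub: "M \<subseteq> {..n}"
  proof
    fix s assume "s \<in> M"
    then obtain S where "s = card S" "S \<subseteq> {..<n}" unfolding M_def by blast
    then have "s \<le> card {..<n}" using card_mono[of "{..<n}" S] by simp
    then show "s \<in> {..n}" by simp
  qed
  have finM: "finite M" using Msub finite_subset by blast
  have "0 \<in> M" unfolding M_def by (force simp: lin_indep_over_def)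
  then have "Max M \<in> M" using finM by (intro Max_in) auto
  then obtain S0 where S0: "Max M = card S0" "S0 \<subseteq> {..<n}" "lin_indep_over F x S0" unfolding M_def by blast
  have rk: "rk F n x = card S0" using S0 unfolding rk_def M_def by simp
  have finS0: "finite S0" using S0(2) finite_subset by blast
  have indS0: "V.ind x S0" using S0(3) by (simp add: lin_indep_eq)
  have gens: "x j \<in> V.spn x S0" if j: "j < n" for j
  proof (cases "j \<in> S0")
    case True then show ?thesis using finS0 by (rule V.gen_in_spn[rotated])
  next
    case False
    show ?thesis
    proof (rule ccontr)
      assume nin: "x j \<notin> V.spn x S0"
      have "V.ind x (insert j S0)" by (rule V.ind_insert[OF finS0 indS0 False nin])
      then have "card (insert j S0) \<in> M" unfolding M_def using S0(2) j by (auto simp: lin_indep_eq)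
      then have "card (insert j S0) \<le> Max M" using finM by simp
      then show False using S0(1) finS0 False by simp
    qed
  qed
  have spn_eq: "V.spn x {..<n} = V.spn x S0"
  proof
    show "V.spn x {..<n} \<subseteq> V.spn x S0" by (rule V.spn_sub[OF V.spn_subsp]) (use gens in auto)
    show "V.spn x S0 \<subseteq> V.spn x {..<n}"
      by (rule V.spn_sub[OF V.spn_subsp]) (use S0(2) V.gen_in_spn in blast)
  qed
  have img: "pr x ` Fn = V.spn x {..<n}"
  proof
    show "pr x ` Fn \<subseteq> V.spn x {..<n}"
    proof
      fix y assume "y \<in> pr x ` Fn"
      then obtain a where a: "a \<in> Fn" "y = pr x a" by blast
      have "y = V.lc x a {..<n}" using a by (simp add: pr_def V.lc_def)
      moreover have "V.lc x a {..<n} \<in> V.spn x {..<n}" by (rule V.in_spnI) (use a in \<open>auto simp: Fn_def\<close>)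
      ultimately show "y \<in> V.spn x {..<n}" by simp
    qed
    show "V.spn x {..<n} \<subseteq> pr x ` Fn"
    proof
      fix y assume "y \<in> V.spn x {..<n}"
      then obtain c where c: "y = V.lc x c {..<n}" "\<forall>i\<in>{..<n}. c i \<in> F" unfolding V.spn_def by blast
      let ?a = "\<lambda>i. if i < n then c i else 0"
      have "?a \<in> Fn" using c by (auto simp: Fn_def)
      moreover have "pr x ?a = y" using c by (simp add: pr_def V.lc_def)
      ultimately show "y \<in> pr x ` Fn" by force
    qed
  qed
  have fib: "card {a \<in> Fn. pr x a = y} = card (kerF x)" if y: "y \<in> pr x ` Fn" for y
  proof -
    obtain a0 where a0: "a0 \<in> Fn" "y = pr x a0" using y by blast
    have "{a \<in> Fn. pr x a = y} = (\<lambda>b. b + a0) ` kerF x"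
    proof
      show "{a \<in> Fn. pr x a = y} \<subseteq> (\<lambda>b. b + a0) ` kerF x"
      proof
        fix a assume a: "a \<in> {a \<in> Fn. pr x a = y}"
        then have "a - a0 \<in> kerF x" using a0 by (auto simp: kerF_def Fn_diff pr_diff)
        moreover have "a = (a - a0) + a0" by simp
        ultimately show "a \<in> (\<lambda>b. b + a0) ` kerF x" by blast
      qed
      show "(\<lambda>b. b + a0) ` kerF x \<subseteq> {a \<in> Fn. pr x a = y}"
        using a0 by (auto simp: kerF_def Fn_add pr_add)
    qed
    moreover have "inj_on (\<lambda>b. b + a0) (kerF x)" by (auto intro: inj_onI)
    ultimately show ?thesis by (simp add: card_image)
  qed
  have "card Fn = card (pr x ` Fn) * card (kerF x)"
    by (rule card_fibers[OF finite_Fn]) (use fib in blast)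
  then have eq: "q ^ n = q ^ card S0 * card (kerF x)"
    using card_Fn img spn_eq V.card_spn[OF finS0 indS0] by simp
  have le: "card S0 \<le> n" using S0(2) by (metis card_lessThan card_mono finite_lessThan)
  then show "rk F n x \<le> n" using rk by simp
  have "q ^ n = q ^ card S0 * q ^ (n - card S0)" using le by (simp add: power_add[symmetric])
  then have "q ^ card S0 * card (kerF x) = q ^ card S0 * q ^ (n - card S0)" using eq by simp
  moreover have "F \<noteq> {}" using card_F2 by auto
  ultimately show "card (kerF x) = q ^ (n - rk F n x)" using rk by simp
qed

lemma rk_le_n: "rk F n x \<le> n" by (rule rk_props)

lemma card_kerF: "card (kerF x) = q ^ (n - rk F n x)" by (rule rk_props)

definition dl :: "nat \<Rightarrow> nat \<Rightarrow> 'a" where "dl i = (\<lambda>j. if j = i then 1 else 0)"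

lemma dl_Fn: "i < n \<Longrightarrow> dl i \<in> Fn"
  using W.Fp by (auto simp: dl_def Fn_def)

lemma pr_dl: "i < n \<Longrightarrow> pr x (dl i) = x i"
proof -
  assume i: "i < n"
  have "pr x (dl i) = (\<Sum>j<n. if j = i then x j else 0)"
    unfolding pr_def dl_def by (rule sum.cong) auto
  also have "\<dots> = x i" using i by simp
  finally show ?thesis .
qed

lemma full_spn: "G \<in> W.tup Fn n \<Longrightarrow> W.spn G {..<n} = Fn"
  by (rule W.spn_full[OF Fn_subsp finite_Fn _ card_Fn])

lemma kerF_full_zero:
  assumes "Fn \<subseteq> kerF y" "y \<in> Vn"
  shows "y = 0"
proof
  fix i show "y i = 0 i"
  proof (cases "i < n")
    case True
    then have "pr y (dl i) = 0" using assms(1) dl_Fn by (auto simp: kerF_def)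
    then show ?thesis using pr_dl True by simp
  next
    case False then show ?thesis using assms(2) by (simp add: vecs_def)
  qed
qed

lemma phi_inj:
  assumes G: "G \<in> W.tup Fn n"
  shows "inj_on (phi G) Vn"
proof (rule inj_onI)
  fix e e' assume e: "e \<in> Vn" "e' \<in> Vn" and eq: "phi G e = phi G e'"
  have "\<forall>j<n. pr (e - e') (G j) = 0"
  proof (intro allI impI)
    fix j assume "j < n"
    then have "pr e (G j) = pr e' (G j)" using fun_cong[OF eq, of j] by (simp add: phi_def)
    then show "pr (e - e') (G j) = 0" by (simp add: pr_diffx)
  qed
  then have "W.spn G {..<n} \<subseteq> kerF (e - e')"
    using G by (intro W.spn_sub[OF kerF_subsp]) (auto simp: kerF_def W.tup_def)
  then have sub: "Fn \<subseteq> kerF (e - e')" using full_spn[OF G] by simp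
  have "e - e' = 0" by (rule kerF_full_zero[OF sub vecs_diff[OF e]])
  then show "e = e'" by (metis right_minus_eq)
qed

lemma phi_vecs: "phi G e \<in> Vn"
  by (simp add: phi_def vecs_def)

lemma phi_img:
  assumes G: "G \<in> W.tup Fn n"
  shows "phi G ` Vn = Vn"
proof -
  have "phi G ` Vn \<subseteq> Vn" using phi_vecs by blast
  moreover have "card (phi G ` Vn) = card Vn" using phi_inj[OF G] by (simp add: card_image)
  ultimately show ?thesis using finite_vecs by (simp add: card_subset_eq)
qed

end

context setting
begin

lemma tup_mono: "U \<subseteq> U' \<Longrightarrow> W.tup U l \<subseteq> W.tup U' l"
  by (auto simp: W.tup_def)

lemma subsp_inter: "W.subsp H \<Longrightarrow> W.subsp K \<Longrightarrow> W.subsp (H \<inter> K)"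
  unfolding W.subsp_def by blast

lemma subsp_sum: "W.subsp H \<Longrightarrow> W.subsp K \<Longrightarrow> W.subsp {s. \<exists>a\<in>H. \<exists>b\<in>K. s = a + b}"
proof -
  assume H: "W.subsp H" and K: "W.subsp K"
  have H0: "0 \<in> H" and Ha: "\<And>x y. x \<in> H \<Longrightarrow> y \<in> H \<Longrightarrow> x + y \<in> H"
    and Hs: "\<And>c x. c \<in> F \<Longrightarrow> x \<in> H \<Longrightarrow> (\<lambda>i. c * x i) \<in> H" using H unfolding W.subsp_def by auto
  have K0: "0 \<in> K" and Ka: "\<And>x y. x \<in> K \<Longrightarrow> y \<in> K \<Longrightarrow> x + y \<in> K"
    and Ks: "\<And>c x. c \<in> F \<Longrightarrow> x \<in> K \<Longrightarrow> (\<lambda>i. c * x i) \<in> K" using K unfolding W.subsp_def by auto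
  let ?S = "{s. \<exists>a\<in>H. \<exists>b\<in>K. s = a + b}"
  have "0 \<in> ?S" using H0 K0 by (intro CollectI bexI[of _ 0]) auto
  moreover have "x + y \<in> ?S" if x: "x \<in> ?S" and y: "y \<in> ?S" for x y
  proof -
    obtain a b where ab: "a \<in> H" "b \<in> K" "x = a + b" using x by blast
    obtain a' b' where ab': "a' \<in> H" "b' \<in> K" "y = a' + b'" using y by blast
    have "x + y = (a + a') + (b + b')" using ab ab' by (simp add: algebra_simps)
    then show ?thesis using Ha[OF ab(1) ab'(1)] Ka[OF ab(2) ab'(2)] by blast
  qed
  moreover have "(\<lambda>i. c * x i) \<in> ?S" if c: "c \<in> F" and x: "x \<in> ?S" for c x
  proof -
    obtain a b where ab: "a \<in> H" "b \<in> K" "x = a + b" using x by blast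
    have "(\<lambda>i. c * x i) = (\<lambda>i. c * a i) + (\<lambda>i. c * b i)" using ab by (simp add: fun_eq_iff algebra_simps)
    then show ?thesis using Hs[OF c ab(1)] Ks[OF c ab(2)] by blast
  qed
  ultimately show ?thesis unfolding W.subsp_def by blast
qed

lemma card_sum_inter:
  assumes H: "W.subsp H" "finite H" and K: "W.subsp K" "finite K"
  shows "card {s. \<exists>a\<in>H. \<exists>b\<in>K. s = a + b} * card (H \<inter> K) = card H * card K"
proof -
  let ?f = "\<lambda>p. fst p + snd p"
  have img: "?f ` (H \<times> K) = {s. \<exists>a\<in>H. \<exists>b\<in>K. s = a + b}" by force
  have fib: "card {p \<in> H \<times> K. ?f p = y} = card (H \<inter> K)" if y: "y \<in> ?f ` (H \<times> K)" for y
  proof -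
    obtain a0 b0 where ab0: "a0 \<in> H" "b0 \<in> K" "y = a0 + b0" using y by auto
    have "{p \<in> H \<times> K. ?f p = y} = (\<lambda>d. (a0 + d, b0 - d)) ` (H \<inter> K)"
    proof (rule set_eqI, rule iffI)
      fix p assume p: "p \<in> {p \<in> H \<times> K. ?f p = y}"
      obtain a b where ab: "p = (a, b)" "a \<in> H" "b \<in> K" "a + b = y" using p by auto
      have d1: "a - a0 \<in> H" using W.subsp_diff[OF H(1) ab(2) ab0(1)] .
      have deq: "a - a0 = b0 - b" using ab(4) ab0(3) by (simp add: algebra_simps)
      have d2: "b0 - b \<in> K" using W.subsp_diff[OF K(1) ab0(2) ab(3)] .
      have "a = a0 + (a - a0)" by simp
      moreover have "b = b0 - (b0 - b)" by simp
      ultimately have "p = (a0 + (a - a0), b0 - (a - a0))" using ab(1) deq by metis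
      then show "p \<in> (\<lambda>d. (a0 + d, b0 - d)) ` (H \<inter> K)" using d1 d2 deq by auto
    next
      fix p assume p: "p \<in> (\<lambda>d. (a0 + d, b0 - d)) ` (H \<inter> K)"
      then obtain d where d: "p = (a0 + d, b0 - d)" "d \<in> H" "d \<in> K" by auto
      have "a0 + d \<in> H" using H(1) ab0(1) d(2) unfolding W.subsp_def by blast
      moreover have "b0 - d \<in> K" using W.subsp_diff[OF K(1) ab0(2) d(3)] .
      ultimately show "p \<in> {p \<in> H \<times> K. ?f p = y}" using ab0(3) d(1) by simp
    qed
    moreover have "inj_on (\<lambda>d. (a0 + d, b0 - d)) (H \<inter> K)" by (rule inj_onI) simp
    ultimately show ?thesis by (simp add: card_image)
  qed
  have "card (H \<times> K) = card (?f ` (H \<times> K)) * card (H \<inter> K)"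
    by (rule card_fibers) (use H K fib in auto)
  then show ?thesis using img by (simp add: card_cartesian_product)
qed

lemma bound_N:
  fixes A B :: "nat \<Rightarrow> nat \<Rightarrow> 'a" and Xs :: "(nat \<Rightarrow> 'a) set"
  assumes A: "A \<in> W.tup Fn (n - t)" and B: "B \<in> W.tup Fn (n - u)"
    and tn: "t \<le> n" and un: "u \<le> n" and kn: "k \<le> n" and r: "n \<le> k + t + u"
    and Xs: "Xs \<subseteq> Vn" "0 \<notin> Xs"
    and mrd: "\<And>x x'. x \<in> insert 0 Xs \<Longrightarrow> x' \<in> insert 0 Xs \<Longrightarrow> x \<noteq> x' \<Longrightarrow> card (kerF (x - x')) < q ^ k"
  shows "card {(x, e). x \<in> Xs \<and> e \<in> Vn \<and> (\<forall>j<n-t. pr e (A j) = pr x (A j)) \<and> (\<forall>j<n-u. pr e (B j) = 0)}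
           \<le> CARD('a) ^ (k + t + u - n)"
proof -
  define SA where "SA = W.spn A {..<n-t}"
  define SB where "SB = W.spn B {..<n-u}"
  define D where "D = SA \<inter> SB"
  define S where "S = {s. \<exists>a\<in>SA. \<exists>b\<in>SB. s = a + b}"
  define Nset where "Nset = {(x, e). x \<in> Xs \<and> e \<in> Vn \<and> (\<forall>j<n-t. pr e (A j) = pr x (A j)) \<and> (\<forall>j<n-u. pr e (B j) = 0)}"
  have SAsub: "SA \<subseteq> Fn" unfolding SA_def by (rule W.spn_tup_sub[OF Fn_subsp A])
  have SBsub: "SB \<subseteq> Fn" unfolding SB_def by (rule W.spn_tup_sub[OF Fn_subsp B])
  have SAs: "W.subsp SA" unfolding SA_def by (rule W.spn_subsp)
  have SBs: "W.subsp SB" unfolding SB_def by (rule W.spn_subsp)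
  have finSA: "finite SA" using SAsub finite_Fn finite_subset by blast
  have finSB: "finite SB" using SBsub finite_Fn finite_subset by blast
  have cSA: "card SA = q ^ (n - t)" unfolding SA_def by (rule W.card_spn_tup[OF A])
  have cSB: "card SB = q ^ (n - u)" unfolding SB_def by (rule W.card_spn_tup[OF B])
  have Ds: "W.subsp D" unfolding D_def by (rule subsp_inter[OF SAs SBs])
  have Ss: "W.subsp S" unfolding S_def by (rule subsp_sum[OF SAs SBs])
  have Dsub: "D \<subseteq> Fn" using SAsub by (auto simp: D_def)
  have Ssub: "S \<subseteq> Fn" unfolding S_def using SAsub SBsub Fn_add by blast
  have finD: "finite D" using Dsub finite_Fn finite_subset by blast
  have finS: "finite S" using Ssub finite_Fn finite_subset by blast
  have prod: "card S * card D = card SA * card SB"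
    unfolding S_def D_def by (rule card_sum_inter[OF SAs finSA SBs finSB])
  obtain dd gD where gD: "gD \<in> W.tup D dd" "W.spn gD {..<dd} = D" "card D = q ^ dd"
    using W.basis_exists[OF Ds finD] by blast
  obtain ss gS where gS: "gS \<in> W.tup S ss" "W.spn gS {..<ss} = S" "card S = q ^ ss"
    using W.basis_exists[OF Ss finS] by blast
  have "q ^ (ss + dd) = q ^ ((n - t) + (n - u))"
    using prod gD(3) gS(3) cSA cSB by (simp add: power_add)
  then have sd: "ss + dd = (n - t) + (n - u)" using W.pow_inj by blast
  have "q ^ ss \<le> q ^ n" using gS(3) card_Fn card_mono[OF finite_Fn Ssub] by simp
  then have ssn: "ss \<le> n" using W.pow_le_mono by blast
  have SAeq: "pr e a = pr x a" if xe: "(x, e) \<in> Nset" and a: "a \<in> SA" for x e a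
    by (rule pr_spn_eq[of "{..<n-t}" e A x]) (use xe a in \<open>auto simp: Nset_def SA_def\<close>)
  have SBeq: "pr e b = 0" if xe: "(x, e) \<in> Nset" and b: "b \<in> SB" for x e b
    using pr_spn_eq[of "{..<n-u}" e B 0 b] xe b by (auto simp: Nset_def SB_def pr_zerox)
  have Dker: "D \<subseteq> kerF x" if xe: "(x, e) \<in> Nset" for x e
  proof
    fix d assume d: "d \<in> D"
    then have dA: "d \<in> SA" "d \<in> SB" by (auto simp: D_def)
    then have "pr x d = 0" using SAeq[OF xe dA(1)] SBeq[OF xe dA(2)] by simp
    then show "d \<in> kerF x" using d Dsub by (auto simp: kerF_def)
  qed
  have xnz: "card (kerF x) < q ^ k" if x: "x \<in> Xs" for x
  proof -
    have "x \<noteq> 0" using x Xs(2) by blast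
    then have "card (kerF (x - 0)) < q ^ k" using mrd[of x 0] x by blast
    then show ?thesis by simp
  qed
  show ?thesis
  proof (cases "dd \<le> k")
    case False
    have "Nset = {}"
    proof (rule ccontr)
      assume "Nset \<noteq> {}"
      then obtain x e where xe: "(x, e) \<in> Nset" by auto
      then have "card D \<le> card (kerF x)" using Dker[OF xe] finite_kerF by (simp add: card_mono)
      moreover have "card (kerF x) < q ^ k" using xe xnz by (auto simp: Nset_def)
      ultimately have "q ^ dd < q ^ k" using gD(3) by simp
      then show False using False W.pow_lt_mono by simp
    qed
    then have "card Nset = 0" by simp
    then show ?thesis unfolding Nset_def by linarith
  next
    case True
    define Xd where "Xd = {x \<in> Xs. D \<subseteq> kerF x}"
    define Ann where "Ann = {e \<in> Vn. \<forall>s\<in>S. pr e s = 0}"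
    define Fib where "Fib x = {e \<in> Vn. (\<forall>j<n-t. pr e (A j) = pr x (A j)) \<and> (\<forall>j<n-u. pr e (B j) = 0)}" for x
    have finXs: "finite Xs" using Xs(1) finite_vecs finite_subset by blast
    have finXd: "finite Xd" using finXs by (simp add: Xd_def)
    have finAnn: "finite Ann" using finite_vecs by (simp add: Ann_def)
    have finFib: "finite (Fib x)" for x using finite_vecs by (simp add: Fib_def)
    have Nsub: "Nset \<subseteq> (SIGMA x:Xd. Fib x)"
    proof clarify
      fix x e assume xe: "(x, e) \<in> Nset"
      then show "x \<in> Xd \<and> e \<in> Fib x" using Dker[OF xe] by (auto simp: Nset_def Xd_def Fib_def)
    qed
    have FibAnn: "card (Fib x) \<le> card Ann" if x: "x \<in> Xd" for x
    proof (cases "Fib x = {}")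
      case True then show ?thesis by simp
    next
      case False
      then obtain e0 where e0: "e0 \<in> Fib x" by blast
      have "(\<lambda>e. e - e0) ` Fib x \<subseteq> Ann"
      proof clarify
        fix e assume e: "e \<in> Fib x"
        have xe: "(x, e) \<in> Nset" "(x, e0) \<in> Nset" using e e0 x by (auto simp: Fib_def Xd_def Nset_def)
        have "pr (e - e0) s = 0" if s: "s \<in> S" for s
        proof -
          obtain a b where ab: "s = a + b" "a \<in> SA" "b \<in> SB" using s by (auto simp: S_def)
          show ?thesis using ab SAeq[OF xe(1)] SAeq[OF xe(2)] SBeq[OF xe(1)] SBeq[OF xe(2)]
            by (simp add: pr_diffx pr_add)
        qed
        moreover have "e - e0 \<in> Vn" using e e0 vecs_diff by (auto simp: Fib_def)
        ultimately show "e - e0 \<in> Ann" by (simp add: Ann_def)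
      qed
      moreover have "inj_on (\<lambda>e. e - e0) (Fib x)" by (auto intro: inj_onI)
      ultimately show ?thesis using finAnn by (metis card_image card_mono)
    qed
    have cAnn: "card Ann \<le> CARD('a) ^ (n - ss)"
    proof -
      have gSF: "gS \<in> W.tup Fn ss" using gS(1) tup_mono[OF Ssub] by blast
      obtain G where G: "G \<in> W.tup Fn n" "\<forall>i<ss. G i = gS i"
        using W.basis_extend[OF Fn_subsp finite_Fn card_Fn gSF ssn order_refl] by blast
      have inj: "inj_on (phi G) Ann" using phi_inj[OF G(1)] by (rule inj_on_subset) (auto simp: Ann_def)
      have "phi G e \<in> {w. (\<forall>j\<in>{ss..<n}. w j \<in> UNIV) \<and> (\<forall>j. j \<notin> {ss..<n} \<longrightarrow> w j = (\<lambda>_. 0) j)}"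
        if e: "e \<in> Ann" for e
      proof -
        have "phi G e j = 0" if j: "j \<notin> {ss..<n}" for j
        proof (cases "j < n")
          case True
          then have "j < ss" using j by simp
          then have "G j \<in> S" using G(2) gS(1) by (auto simp: W.tup_def)
          then show ?thesis using e True by (simp add: phi_def Ann_def)
        qed (simp add: phi_def)
        then show ?thesis by simp
      qed
      then have "phi G ` Ann \<subseteq> {w. (\<forall>j\<in>{ss..<n}. w j \<in> UNIV) \<and> (\<forall>j. j \<notin> {ss..<n} \<longrightarrow> w j = (\<lambda>_. 0) j)}"
        by blast
      moreover have "finite {w. (\<forall>j\<in>{ss..<n}. w j \<in> (UNIV::'a set)) \<and> (\<forall>j. j \<notin> {ss..<n} \<longrightarrow> w j = (\<lambda>_. 0) j)}"
        by (rule finite_funs) auto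
      ultimately have "card (phi G ` Ann) \<le> card {w. (\<forall>j\<in>{ss..<n}. w j \<in> (UNIV::'a set)) \<and> (\<forall>j. j \<notin> {ss..<n} \<longrightarrow> w j = (\<lambda>_. 0) j)}"
        by (intro card_mono)
      also have "\<dots> = CARD('a) ^ card {ss..<n}" by (rule card_funs) simp
      finally have "card (phi G ` Ann) \<le> CARD('a) ^ card {ss..<n}" .
      then show ?thesis using inj by (simp add: card_image)
    qed
    have cXd: "card Xd \<le> CARD('a) ^ (k - dd)"
    proof -
      have gDF: "gD \<in> W.tup Fn dd" using gD(1) tup_mono[OF Dsub] by blast
      obtain H where H: "H \<in> W.tup Fn k" "\<forall>i<dd. H i = gD i"
        using W.basis_extend[OF Fn_subsp finite_Fn card_Fn gDF True kn] by blast
      define psi where "psi x = (\<lambda>j. if j < k then pr x (H j) else 0)" for x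
      have inj: "inj_on psi Xd"
      proof (rule inj_onI)
        fix x x' assume x: "x \<in> Xd" "x' \<in> Xd" and eq: "psi x = psi x'"
        have "\<forall>j<k. pr (x - x') (H j) = 0"
        proof (intro allI impI)
          fix j assume "j < k"
          then have "pr x (H j) = pr x' (H j)" using fun_cong[OF eq, of j] by (simp add: psi_def)
          then show "pr (x - x') (H j) = 0" by (simp add: pr_diffx)
        qed
        then have "W.spn H {..<k} \<subseteq> kerF (x - x')"
          using H(1) by (intro W.spn_sub[OF kerF_subsp]) (auto simp: kerF_def W.tup_def)
        then have "q ^ k \<le> card (kerF (x - x'))"
          using W.card_spn_tup[OF H(1)] finite_kerF by (metis card_mono)
        then show "x = x'" using mrd[of x x'] x by (auto simp: Xd_def)
      qed
      have "psi x \<in> {w. (\<forall>j\<in>{dd..<k}. w j \<in> UNIV) \<and> (\<forall>j. j \<notin> {dd..<k} \<longrightarrow> w j = (\<lambda>_. 0) j)}"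
        if x: "x \<in> Xd" for x
      proof -
        have "psi x j = 0" if j: "j \<notin> {dd..<k}" for j
        proof (cases "j < k")
          case True
          then have "j < dd" using j by simp
          then have "H j \<in> D" using H(2) gD(1) by (auto simp: W.tup_def)
          then have "H j \<in> kerF x" using x by (auto simp: Xd_def)
          then show ?thesis using True by (simp add: psi_def kerF_def)
        qed (simp add: psi_def)
        then show ?thesis by simp
      qed
      then have "psi ` Xd \<subseteq> {w. (\<forall>j\<in>{dd..<k}. w j \<in> UNIV) \<and> (\<forall>j. j \<notin> {dd..<k} \<longrightarrow> w j = (\<lambda>_. 0) j)}"
        by blast
      moreover have "finite {w. (\<forall>j\<in>{dd..<k}. w j \<in> (UNIV::'a set)) \<and> (\<forall>j. j \<notin> {dd..<k} \<longrightarrow> w j = (\<lambda>_. 0) j)}"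
        by (rule finite_funs) auto
      ultimately have "card (psi ` Xd) \<le> card {w. (\<forall>j\<in>{dd..<k}. w j \<in> (UNIV::'a set)) \<and> (\<forall>j. j \<notin> {dd..<k} \<longrightarrow> w j = (\<lambda>_. 0) j)}"
        by (intro card_mono)
      also have "\<dots> = CARD('a) ^ card {dd..<k}" by (rule card_funs) simp
      finally have "card (psi ` Xd) \<le> CARD('a) ^ card {dd..<k}" .
      then show ?thesis using inj by (simp add: card_image)
    qed
    have "card Nset \<le> card (SIGMA x:Xd. Fib x)"
      by (rule card_mono[OF _ Nsub]) (use finXd finFib in auto)
    also have "\<dots> = (\<Sum>x\<in>Xd. card (Fib x))" using finXd finFib by (simp add: card_SigmaI)
    also have "\<dots> \<le> (\<Sum>x\<in>Xd. card Ann)" by (rule sum_mono) (use FibAnn in blast)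
    also have "\<dots> = card Xd * card Ann" by simp
    also have "\<dots> \<le> CARD('a) ^ (k - dd) * CARD('a) ^ (n - ss)" using cXd cAnn by (rule mult_le_mono)
    also have "\<dots> = CARD('a) ^ (k + t + u - n)"
    proof -
      have "k - dd + (n - ss) = k + t + u - n" using sd True ssn tn un r by linarith
      then show ?thesis by (simp add: power_add[symmetric])
    qed
    finally show ?thesis unfolding Nset_def .
  qed
qed

end

context setting
begin

definition wv :: "nat \<Rightarrow> (nat \<Rightarrow> 'a) \<Rightarrow> (nat \<Rightarrow> 'a)" where
  "wv u v = (\<lambda>j. if j < n - u then 0 else if j < n then v (j - (n - u)) else 0)"

definition extB :: "nat \<Rightarrow> (nat \<Rightarrow> nat \<Rightarrow> 'a) \<Rightarrow> (nat \<Rightarrow> nat \<Rightarrow> 'a)" where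
  "extB u B = (SOME G. G \<in> W.tup Fn n \<and> (\<forall>j<n-u. G j = B j))"

definition eB :: "nat \<Rightarrow> (nat \<Rightarrow> nat \<Rightarrow> 'a) \<Rightarrow> (nat \<Rightarrow> 'a) \<Rightarrow> (nat \<Rightarrow> 'a)" where
  "eB u B v = the_inv_into Vn (phi (extB u B)) (wv u v)"

lemma wv_shift: "i < u \<Longrightarrow> u \<le> n \<Longrightarrow> wv u f (i + (n - u)) = f i"
proof -
  assume i: "i < u" and un: "u \<le> n"
  have a: "\<not> (i + (n - u) < n - u)" by simp
  have b: "i + (n - u) < n" using i un by linarith
  have c: "i + (n - u) - (n - u) = i" by simp
  show ?thesis unfolding wv_def using a b c by presburger
qed

lemma extB_props:
  assumes B: "B \<in> W.tup Fn (n - u)"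
  shows "extB u B \<in> W.tup Fn n" "\<forall>j<n-u. extB u B j = B j"
proof -
  have "\<exists>G. G \<in> W.tup Fn n \<and> (\<forall>j<n-u. G j = B j)"
    using W.basis_extend[OF Fn_subsp finite_Fn card_Fn B, of n] by auto
  then have "extB u B \<in> W.tup Fn n \<and> (\<forall>j<n-u. extB u B j = B j)"
    unfolding extB_def by (rule someI_ex)
  then show "extB u B \<in> W.tup Fn n" "\<forall>j<n-u. extB u B j = B j" by auto
qed

lemma eB_props:
  assumes B: "B \<in> W.tup Fn (n - u)"
  shows "eB u B v \<in> Vn" "phi (extB u B) (eB u B v) = wv u v"
proof -
  let ?G = "extB u B"
  have G: "?G \<in> W.tup Fn n" using extB_props[OF B] by blast
  have w: "wv u v \<in> phi ?G ` Vn" using phi_img[OF G] by (simp add: wv_def vecs_def)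
  show "eB u B v \<in> Vn" unfolding eB_def by (rule the_inv_into_into[OF phi_inj[OF G] w order_refl])
  show "phi ?G (eB u B v) = wv u v" unfolding eB_def by (rule f_the_inv_into_f[OF phi_inj[OF G] w])
qed

lemma eB_ker:
  assumes B: "B \<in> W.tup Fn (n - u)" and v: "v \<in> V.tup UNIV u" and un: "u \<le> n"
  shows "kerF (eB u B v) = W.spn B {..<n-u}" "B \<in> W.tup (kerF (eB u B v)) (n - u)"
proof -
  let ?G = "extB u B" and ?e = "eB u B v"
  have G: "?G \<in> W.tup Fn n" "\<forall>j<n-u. ?G j = B j" using extB_props[OF B] by blast+
  have phe: "phi ?G ?e = wv u v" using eB_props[OF B] by blast
  have prG: "pr ?e (?G j) = wv u v j" if "j < n" for j
    using fun_cong[OF phe, of j] that by (simp add: phi_def)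
  have Bk: "B j \<in> kerF ?e" if j: "j < n - u" for j
  proof -
    have "pr ?e (B j) = 0" using prG[of j] G(2) j by (simp add: wv_def)
    moreover have "B j \<in> Fn" using B j by (auto simp: W.tup_def)
    ultimately show ?thesis by (simp add: kerF_def)
  qed
  show "B \<in> W.tup (kerF ?e) (n - u)" using B Bk by (auto simp: W.tup_def)
  show "kerF ?e = W.spn B {..<n-u}"
  proof
    show "W.spn B {..<n-u} \<subseteq> kerF ?e" by (rule W.spn_sub[OF kerF_subsp]) (use Bk in auto)
    show "kerF ?e \<subseteq> W.spn B {..<n-u}"
    proof
      fix a assume a: "a \<in> kerF ?e"
      then have "a \<in> W.spn ?G {..<n}" using full_spn[OF G(1)] by (auto simp: kerF_def)
      then obtain g where g: "a = W.lc ?G g {..<n}" "\<forall>i\<in>{..<n}. g i \<in> F" unfolding W.spn_def by blast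
      have "0 = pr ?e a" using a by (simp add: kerF_def)
      also have "\<dots> = (\<Sum>j<n. g j * wv u v j)" using g(1) prG by (simp add: pr_lc)
      also have "\<dots> = (\<Sum>j\<in>{n-u..<n}. g j * wv u v j)"
        by (rule sum.mono_neutral_right) (auto simp: wv_def)
      also have "\<dots> = (\<Sum>i<u. g (i + (n - u)) * wv u v (i + (n - u)))"
        by (rule sum.reindex_bij_witness[where i = "\<lambda>i. i + (n - u)" and j = "\<lambda>j. j - (n - u)"]) (use un in auto)
      also have "\<dots> = V.lc v (\<lambda>i. g (i + (n - u))) {..<u}"
        unfolding V.lc_def by (rule sum.cong) (use un in \<open>auto simp: wv_def\<close>)
      finally have z: "V.lc v (\<lambda>i. g (i + (n - u))) {..<u} = 0" by simp
      have indv: "V.ind v {..<u}" using v by (simp add: V.tup_def)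
      have gz: "g (i + (n - u)) = 0" if i: "i < u" for i
        by (rule V.indD[OF indv _ z]) (use g(2) un i in auto)
      have "a = W.lc ?G g {..<n-u}"
        unfolding g(1)
      proof (rule W.lc_mono_zero)
        fix i assume i: "i \<in> {..<n} - {..<n-u}"
        then have "i = (i - (n - u)) + (n - u)" "i - (n - u) < u" using un by auto
        then show "g i = 0" using gz by metis
      qed auto
      also have "\<dots> = W.lc B g {..<n-u}" by (rule W.lc_cong) (use G(2) in auto)
      finally show "a \<in> W.spn B {..<n-u}" using g(2) by (auto intro!: W.in_spnI)
    qed
  qed
qed

lemma eB_rank:
  assumes B: "B \<in> W.tup Fn (n - u)" and v: "v \<in> V.tup UNIV u" and un: "u \<le> n"
  shows "rk F n (eB u B v) = u"
proof -
  have "card (kerF (eB u B v)) = q ^ (n - u)"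
    using eB_ker[OF B v un] W.card_spn_tup[OF B] by simp
  then have "n - rk F n (eB u B v) = n - u" using card_kerF W.pow_inj by metis
  then show ?thesis using rk_le_n[of "eB u B v"] un by linarith
qed

lemma bound_R:
  assumes un: "u \<le> n"
  shows "card (W.tup Fn (n - u)) * card (V.tup (UNIV::'a set) u)
           \<le> card {e \<in> Vn. rk F n e = u} * (\<Prod>i<n-u. q ^ (n - u) - q ^ i)"
proof -
  define R where "R = {e \<in> Vn. rk F n e = u}"
  define Sg where "Sg = (SIGMA e:R. W.tup (kerF e) (n - u))"
  have finR: "finite R" using finite_vecs by (simp add: R_def)
  have finSg: "finite Sg" unfolding Sg_def using finR by (intro finite_SigmaI W.tup_finite finite_kerF)
  have "card Sg = (\<Sum>e\<in>R. card (W.tup (kerF e) (n - u)))"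
    unfolding Sg_def using finR by (intro card_SigmaI) (auto intro: W.tup_finite finite_kerF)
  also have "\<dots> = (\<Sum>e\<in>R. (\<Prod>i<n-u. q ^ (n - u) - q ^ i))"
  proof (rule sum.cong)
    fix e assume e: "e \<in> R"
    have "card (W.tup (kerF e) (n - u)) = (\<Prod>i<n-u. card (kerF e) - q ^ i)"
      by (rule W.card_tup[OF kerF_subsp finite_kerF])
    then show "card (W.tup (kerF e) (n - u)) = (\<Prod>i<n-u. q ^ (n - u) - q ^ i)"
      using e card_kerF by (simp add: R_def)
  qed simp
  also have "\<dots> = card R * (\<Prod>i<n-u. q ^ (n - u) - q ^ i)" by simp
  finally have cSg: "card Sg = card R * (\<Prod>i<n-u. q ^ (n - u) - q ^ i)" .
  define mm where "mm p = (eB u (fst p) (snd p), fst p)" for p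
  have inj: "inj_on mm (W.tup Fn (n - u) \<times> V.tup UNIV u)"
  proof (rule inj_onI, clarify)
    fix B v B' v' assume B: "B \<in> W.tup Fn (n - u)" "v \<in> V.tup UNIV u"
      and B': "B' \<in> W.tup Fn (n - u)" "v' \<in> V.tup UNIV u" and eq: "mm (B, v) = mm (B', v')"
    have BB: "B' = B" using eq by (simp add: mm_def)
    have ee: "eB u B v = eB u B v'" using eq BB by (simp add: mm_def)
    have "wv u v = wv u v'" using eB_props(2)[OF B(1), of v] eB_props(2)[OF B(1), of v'] ee by simp
    then have "v = v'"
    proof -
      assume w: "wv u v = wv u v'"
      show "v = v'"
      proof
        fix i show "v i = v' i"
        proof (cases "i < u")
          case True
          then show ?thesis using fun_cong[OF w, of "i + (n - u)"] un wv_shift by metis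
        next
          case False
          then show ?thesis using B(2) B'(2) by (simp add: V.tup_def)
        qed
      qed
    qed
    then show "B = B' \<and> v = v'" using BB by simp
  qed
  have sub: "mm ` (W.tup Fn (n - u) \<times> V.tup UNIV u) \<subseteq> Sg"
  proof (rule image_subsetI)
    fix p assume p: "p \<in> W.tup Fn (n - u) \<times> V.tup UNIV u"
    then obtain B v where pv: "p = (B, v)" and B: "B \<in> W.tup Fn (n - u)" and v: "v \<in> V.tup UNIV u" by blast
    show "mm p \<in> Sg" unfolding pv
      using eB_props(1)[OF B] eB_rank[OF B v un] eB_ker(2)[OF B v un]
      by (simp add: mm_def Sg_def R_def)
  qed
  have "card (W.tup Fn (n - u) \<times> V.tup UNIV u) \<le> card Sg"
    by (rule card_inj_on_le[OF inj sub finSg])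
  then show ?thesis using cSg by (simp add: card_cartesian_product R_def)
qed

end

context setting
begin

lemma bound_E:
  fixes Xs :: "(nat \<Rightarrow> 'a) set"
  assumes tn: "t \<le> n" and un: "u \<le> n" and kn: "k \<le> n" and r: "n \<le> k + t + u"
    and Xs: "Xs \<subseteq> Vn" "0 \<notin> Xs"
    and mrd: "\<And>x x'. x \<in> insert 0 Xs \<Longrightarrow> x' \<in> insert 0 Xs \<Longrightarrow> x \<noteq> x' \<Longrightarrow> card (kerF (x - x')) < q ^ k"
  shows "card {e \<in> Vn. rk F n e = u \<and> (\<exists>x\<in>Xs. rk F n (e - x) \<le> t)}
           * (\<Prod>i<n-t. q ^ (n - t) - q ^ i) * (\<Prod>i<n-u. q ^ (n - u) - q ^ i)
         \<le> card (W.tup Fn (n - t)) * card (W.tup Fn (n - u)) * CARD('a) ^ (k + t + u - n)"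
proof -
  define E where "E = {e \<in> Vn. rk F n e = u \<and> (\<exists>x\<in>Xs. rk F n (e - x) \<le> t)}"
  define xe where "xe e = (SOME x. x \<in> Xs \<and> rk F n (e - x) \<le> t)" for e
  have xe: "xe e \<in> Xs" "rk F n (e - xe e) \<le> t" if e: "e \<in> E" for e
  proof -
    have "\<exists>x. x \<in> Xs \<and> rk F n (e - x) \<le> t" using e by (auto simp: E_def)
    then have "xe e \<in> Xs \<and> rk F n (e - xe e) \<le> t" unfolding xe_def by (rule someI_ex)
    then show "xe e \<in> Xs" "rk F n (e - xe e) \<le> t" by auto
  qed
  define GT where "GT = (\<Prod>i<n-t. q ^ (n - t) - q ^ i)"
  define GU where "GU = (\<Prod>i<n-u. q ^ (n - u) - q ^ i)"
  define T1 where "T1 = W.tup Fn (n - t)"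
  define T2 where "T2 = W.tup Fn (n - u)"
  define Nset where "Nset A B = {(x, e). x \<in> Xs \<and> e \<in> Vn \<and> (\<forall>j<n-t. pr e (A j) = pr x (A j)) \<and> (\<forall>j<n-u. pr e (B j) = 0)}" for A B
  define Tr where "Tr = (SIGMA e:E. W.tup (kerF (e - xe e)) (n - t) \<times> W.tup (kerF e) (n - u))"
  define Tg where "Tg = (SIGMA AB:T1 \<times> T2. Nset (fst AB) (snd AB))"
  have finE: "finite E" using finite_vecs by (simp add: E_def)
  have finXs: "finite Xs" using Xs(1) finite_vecs finite_subset by blast
  have finT1: "finite T1" unfolding T1_def by (rule W.tup_finite[OF finite_Fn])
  have finT2: "finite T2" unfolding T2_def by (rule W.tup_finite[OF finite_Fn])
  have finN: "finite (Nset A B)" for A B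
  proof -
    have "Nset A B \<subseteq> Xs \<times> Vn" by (auto simp: Nset_def)
    then show ?thesis using finXs finite_vecs finite_subset by blast
  qed
  have finTg: "finite Tg" unfolding Tg_def using finT1 finT2 finN by (intro finite_SigmaI) auto
  have cT1: "card (W.tup (kerF y) (n - t)) \<ge> GT" if y: "rk F n y \<le> t" for y
  proof -
    have "card (W.tup (kerF y) (n - t)) = (\<Prod>i<n-t. card (kerF y) - q ^ i)"
      by (rule W.card_tup[OF kerF_subsp finite_kerF])
    also have "\<dots> = (\<Prod>i<n-t. q ^ (n - rk F n y) - q ^ i)" by (simp add: card_kerF)
    also have "\<dots> \<ge> GT" unfolding GT_def
    proof (rule prod_mono)
      fix i assume "i \<in> {..<n-t}"
      have "q ^ (n - t) \<le> q ^ (n - rk F n y)" using y W.pow_le_mono by simp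
      then show "0 \<le> q ^ (n - t) - q ^ i \<and> q ^ (n - t) - q ^ i \<le> q ^ (n - rk F n y) - q ^ i" by simp
    qed
    finally show ?thesis .
  qed
  have cT2: "card (W.tup (kerF e) (n - u)) = GU" if e: "e \<in> E" for e
  proof -
    have "card (W.tup (kerF e) (n - u)) = (\<Prod>i<n-u. card (kerF e) - q ^ i)"
      by (rule W.card_tup[OF kerF_subsp finite_kerF])
    then show ?thesis using e card_kerF by (simp add: E_def GU_def)
  qed
  have "card E * GT * GU = (\<Sum>e\<in>E. GT * GU)" by simp
  also have "\<dots> \<le> (\<Sum>e\<in>E. card (W.tup (kerF (e - xe e)) (n - t)) * card (W.tup (kerF e) (n - u)))"
    by (rule sum_mono) (use cT1 cT2 xe in \<open>auto intro: mult_le_mono\<close>)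
  also have "\<dots> = card Tr"
    unfolding Tr_def using finE
    by (subst card_SigmaI) (auto simp: card_cartesian_product intro: W.tup_finite finite_kerF)
  also have "\<dots> \<le> card Tg"
  proof (rule card_inj_on_le[OF _ _ finTg])
    let ?m = "\<lambda>p. ((fst (snd p), snd (snd p)), (xe (fst p), fst p))"
    show "inj_on ?m Tr" by (rule inj_onI) (auto simp: prod_eq_iff)
    show "?m ` Tr \<subseteq> Tg"
    proof (rule image_subsetI)
      fix p assume p: "p \<in> Tr"
      then obtain e A B where pe: "p = (e, A, B)" and e: "e \<in> E"
        and A: "A \<in> W.tup (kerF (e - xe e)) (n - t)" and B: "B \<in> W.tup (kerF e) (n - u)"
        unfolding Tr_def by auto
      have A1: "A \<in> T1" using A tup_mono[OF kerF_sub] by (auto simp: T1_def)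
      have B1: "B \<in> T2" using B tup_mono[OF kerF_sub] by (auto simp: T2_def)
      have "\<forall>j<n-t. pr e (A j) = pr (xe e) (A j)"
      proof (intro allI impI)
        fix j assume "j < n - t"
        then have "A j \<in> kerF (e - xe e)" using A by (auto simp: W.tup_def)
        then show "pr e (A j) = pr (xe e) (A j)" by (simp add: kerF_def pr_diffx)
      qed
      moreover have "\<forall>j<n-u. pr e (B j) = 0" using B by (auto simp: W.tup_def kerF_def)
      ultimately have "(xe e, e) \<in> Nset A B" using xe[OF e] e by (auto simp: Nset_def E_def)
      then show "?m p \<in> Tg" using A1 B1 by (simp add: pe Tg_def)
    qed
  qed
  also have "\<dots> = (\<Sum>AB\<in>T1 \<times> T2. card (Nset (fst AB) (snd AB)))"
    unfolding Tg_def using finT1 finT2 finN by (intro card_SigmaI) auto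
  also have "\<dots> \<le> (\<Sum>AB\<in>T1 \<times> T2. CARD('a) ^ (k + t + u - n))"
  proof (rule sum_mono)
    fix AB assume AB: "AB \<in> T1 \<times> T2"
    show "card (Nset (fst AB) (snd AB)) \<le> CARD('a) ^ (k + t + u - n)"
      unfolding Nset_def
      by (rule bound_N[OF _ _ tn un kn r Xs mrd]) (use AB in \<open>auto simp: T1_def T2_def\<close>)
  qed
  also have "\<dots> = card T1 * card T2 * CARD('a) ^ (k + t + u - n)" by (simp add: card_cartesian_product)
  finally show ?thesis unfolding E_def GT_def GU_def T1_def T2_def .
qed

end

lemma exp_ineq_int:
  fixes n m k t u :: int
  assumes "m * (2 * t) \<le> m * (n - k)" "n * t \<le> m * t"
  shows "n * (n - t) + m * (k + t + u - n) + t * t \<le> (n - t) * (n - t) + m * u"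
  using assms by (simp add: algebra_simps)

lemma exp_ineq:
  fixes n m k t u :: nat
  assumes "2 * t \<le> n - k" "k \<le> n" "n \<le> m" "n \<le> k + t + u" "t \<le> n"
  shows "n * (n - t) + m * (k + t + u - n) + t * t \<le> (n - t) * (n - t) + m * u"
proof -
  have h1: "int m * (2 * int t) \<le> int m * (int n - int k)"
  proof -
    have "m * (2 * t) \<le> m * (n - k)" using assms by simp
    then have "int (m * (2 * t)) \<le> int (m * (n - k))" by linarith
    then show ?thesis using assms by (simp add: of_nat_diff)
  qed
  have h2: "int n * int t \<le> int m * int t"
  proof -
    have "n * t \<le> m * t" using assms by simp
    then show ?thesis by (metis of_nat_le_iff of_nat_mult)
  qed
  have "int (n * (n - t) + m * (k + t + u - n) + t * t)
      = int n * (int n - int t) + int m * (int k + int t + int u - int n) + int t * int t"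
    using assms by (simp add: of_nat_diff)
  also have "\<dots> \<le> (int n - int t) * (int n - int t) + int m * int u" by (rule exp_ineq_int[OF h1 h2])
  also have "\<dots> = int ((n - t) * (n - t) + m * u)" using assms by (simp add: of_nat_diff)
  finally show ?thesis by linarith
qed

lemma real_prod_diff:
  fixes q :: nat
  assumes "\<And>i. i < L \<Longrightarrow> q ^ i \<le> q ^ N"
  shows "real (\<Prod>i<L. q ^ N - q ^ i) = (\<Prod>i<L. real q ^ N - real q ^ i)"
  by (simp add: of_nat_diff assms)

theorem proposition6:
  fixes F :: "'a::{field,finite} set"
    and C :: "(nat \<Rightarrow> 'a) set"
    and q m n k :: nat
  assumes "primepow q"
    and "CARD('a) = q ^ m"
    and "is_subfield F" and "card F = q"
    and "n \<le> m" and "1 \<le> k" and "k \<le> n"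
    and "C \<subseteq> vecs n" and "card C = q ^ (m * k)"
    and "min_rank_dist F n C = n - k + 1"
    and "c \<in> C"
    and "(n - k + 1) - (n - k) div 2 \<le> u" and "u \<le> n"
  shows "PE F n C c ((n - k) div 2) u
           < (1 / real q ^ (((n - k) div 2)\<^sup>2)) / (Kq q)\<^sup>2"
proof -
  interpret S: setting F n by unfold_locales (rule assms(3))
  define t where "t = (n - k) div 2"
  have q2: "q \<ge> 2" using S.card_F2 assms(4) by simp
  have t2: "2 * t \<le> n - k" unfolding t_def by simp
  have tn: "t \<le> n" using t2 by simp
  have un: "u \<le> n" by (rule assms(13))
  have kn: "k \<le> n" by (rule assms(7))
  have r: "n \<le> k + t + u" using assms(12) t2 kn unfolding t_def[symmetric] by linarith
  have um: "u \<le> m" using un assms(5) by simp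
  define Xs where "Xs = {c' - c | c'. c' \<in> C \<and> c' \<noteq> c}"
  have cvec: "c \<in> vecs n" using assms(8,11) by blast
  have Xs1: "Xs \<subseteq> vecs n" unfolding Xs_def using assms(8) cvec S.vecs_diff by blast
  have Xs2: "0 \<notin> Xs" unfolding Xs_def by (auto simp: right_minus_eq)
  have ins: "x \<in> insert 0 Xs \<Longrightarrow> \<exists>c1\<in>C. x = c1 - c" for x
    unfolding Xs_def using assms(11) by auto
  have mind: "n - k + 1 \<le> rk F n (\<lambda>i. c1 i - c2 i)" if c12: "c1 \<in> C" "c2 \<in> C" "c1 \<noteq> c2" for c1 c2
  proof -
    let ?M = "{rk F n (\<lambda>i. c i - d i) |c d. c \<in> C \<and> d \<in> C \<and> c \<noteq> d}"
    have "?M \<subseteq> {..n}" using S.rk_le_n by auto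
    then have "finite ?M" using finite_subset by blast
    moreover have "rk F n (\<lambda>i. c1 i - c2 i) \<in> ?M" using c12 by blast
    ultimately have "Min ?M \<le> rk F n (\<lambda>i. c1 i - c2 i)" by simp
    then show ?thesis using assms(10) unfolding min_rank_dist_def by simp
  qed
  have mrd: "card (S.kerF (x - x')) < card F ^ k"
    if x: "x \<in> insert 0 Xs" "x' \<in> insert 0 Xs" "x \<noteq> x'" for x x'
  proof -
    obtain c1 c2 where c1: "c1 \<in> C" "x = c1 - c" and c2: "c2 \<in> C" "x' = c2 - c" using ins x by blast
    have xx: "x - x' = (\<lambda>i. c1 i - c2 i)" using c1 c2 by (simp add: fun_eq_iff)
    have "c1 \<noteq> c2" using x c1 c2 by auto
    then have "n - k + 1 \<le> rk F n (x - x')" using mind c1 c2 xx by simp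
    then have "n - rk F n (x - x') < k" using assms(6) by linarith
    then show ?thesis using S.card_kerF S.W.pow_lt_mono by simp
  qed
  define E where "E = {e \<in> vecs n. rk F n e = u \<and> decoder_error F n C t c e}"
  define R where "R = {e \<in> vecs n. rk F n e = u}"
  have Eeq: "E = {e \<in> vecs n. rk F n e = u \<and> (\<exists>x\<in>Xs. rk F n (e - x) \<le> t)}"
  proof -
    have "decoder_error F n C t c e \<longleftrightarrow> (\<exists>x\<in>Xs. rk F n (e - x) \<le> t)" for e
    proof -
      have eq: "(\<lambda>i. c i + e i - c' i) = e - (c' - c)" for c' by (simp add: fun_eq_iff)
      show ?thesis unfolding decoder_error_def Xs_def eq by blast
    qed
    then show ?thesis unfolding E_def by simp
  qed
  define GT where "GT = (\<Prod>i<n-t. card F ^ (n - t) - card F ^ i)"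
  define GU where "GU = (\<Prod>i<n-u. card F ^ (n - u) - card F ^ i)"
  define T1 where "T1 = card (S.W.tup S.Fn (n - t))"
  define T2 where "T2 = card (S.W.tup S.Fn (n - u))"
  define TV where "TV = card (S.V.tup (UNIV::'a set) u)"
  define ee where "ee = k + t + u - n"
  have hE: "card E * GT * GU \<le> T1 * T2 * CARD('a) ^ ee"
    unfolding Eeq GT_def GU_def T1_def T2_def ee_def
    by (rule S.bound_E[OF tn un kn r Xs1 Xs2 mrd])
  have hR: "T2 * TV \<le> card R * GU"
    unfolding R_def T2_def TV_def GU_def by (rule S.bound_R[OF un])
  have T1eq: "T1 = (\<Prod>i<n-t. q ^ n - q ^ i)"
    unfolding T1_def using S.W.card_tup[OF S.Fn_subsp S.finite_Fn] S.card_Fn assms(4) by simp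
  have T2eq: "T2 = (\<Prod>i<n-u. q ^ n - q ^ i)"
    unfolding T2_def using S.W.card_tup[OF S.Fn_subsp S.finite_Fn] S.card_Fn assms(4) by simp
  have Vsub: "S.V.subsp (UNIV::'a set)" by (simp add: S.V.subsp_def)
  have finU: "finite (UNIV::'a set)" by simp
  have TVeq: "TV = (\<Prod>i<u. q ^ m - q ^ i)"
    unfolding TV_def using S.V.card_tup[OF Vsub finU] assms(2,4) by simp
  have GTeq: "GT = (\<Prod>i<n-t. q ^ (n - t) - q ^ i)" unfolding GT_def assms(4) ..
  have GUeq: "GU = (\<Prod>i<n-u. q ^ (n - u) - q ^ i)" unfolding GU_def assms(4) ..
  have powlt: "q ^ i < q ^ j" if "i < j" for i j using that q2 by (simp add: power_strict_increasing_iff)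
  have T2pos: "T2 > 0" unfolding T2eq by (rule prod_pos) (use powlt in auto)
  have TVpos: "TV > 0" unfolding TVeq by (rule prod_pos) (use powlt assms(5) un in auto)
  have GTpos: "GT > 0" unfolding GTeq by (rule prod_pos) (use powlt in auto)
  have GUpos: "GU > 0" unfolding GUeq by (rule prod_pos) (use powlt in auto)
  have Rpos: "card R > 0"
  proof -
    have "0 < T2 * TV" using T2pos TVpos by simp
    then have "0 < card R * GU" using hR by linarith
    then show ?thesis by simp
  qed
  have key: "card E * GT * TV \<le> T1 * CARD('a) ^ ee * card R"
  proof -
    have "(card E * GT * GU) * (T2 * TV) \<le> (T1 * T2 * CARD('a) ^ ee) * (card R * GU)"
      by (rule mult_le_mono[OF hE hR])
    then have "(card E * GT * TV) * (GU * T2) \<le> (T1 * CARD('a) ^ ee * card R) * (GU * T2)"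
      by (simp add: ac_simps)
    then show ?thesis using GUpos T2pos by simp
  qed
  define a where "a = real q"
  define L where "L = n - t"
  have a1: "a \<ge> 1" using q2 by (simp add: a_def)
  have PEeq: "PE F n C c t u = real (card E) / real (card R)"
    unfolding PE_def E_def R_def ..
  have step1: "PE F n C c t u \<le> real (T1 * CARD('a) ^ ee) / real (GT * TV)"
  proof -
    have "real (card E * GT * TV) \<le> real (T1 * CARD('a) ^ ee * card R)" using key by linarith
    then have "real (card E) * (real GT * real TV) \<le> real (T1 * CARD('a) ^ ee) * real (card R)"
      by (simp add: ac_simps)
    moreover have "real (card R) > 0" "real GT * real TV > 0" using Rpos GTpos TVpos by auto
    ultimately show ?thesis unfolding PEeq by (simp add: divide_simps)
  qed
  have T1le: "real T1 \<le> a ^ (n * L)"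
  proof -
    have "T1 \<le> (\<Prod>i<n-t. q ^ n)" unfolding T1eq by (rule prod_mono) simp
    also have "\<dots> = q ^ (n * L)" by (simp add: L_def power_mult)
    finally show ?thesis unfolding a_def by (metis of_nat_le_iff of_nat_power)
  qed
  have Qe: "real (CARD('a) ^ ee) = a ^ (m * ee)" unfolding a_def assms(2) by (simp add: power_mult)
  have GTr: "real GT = a ^ (L * L) * Pq q L"
  proof -
    have "real GT = (\<Prod>i<L. real q ^ L - real q ^ i)"
      unfolding GTeq L_def by (rule real_prod_diff) (use powlt in \<open>auto intro: less_imp_le\<close>)
    then show ?thesis using prod_pow_diff[OF q2, of L] by (simp add: a_def)
  qed
  have TVr: "real TV \<ge> a ^ (m * u) * Pq q m"
  proof -
    have "real TV = (\<Prod>i<u. real q ^ m - real q ^ i)"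
      unfolding TVeq by (rule real_prod_diff) (use powlt um in \<open>auto intro: less_imp_le\<close>)
    then show ?thesis using prod_pow_diff_ge[OF q2 um] by (simp add: a_def)
  qed
  have PL: "Pq q L > 0" and Pm: "Pq q m > 0" using Pq_pos[OF q2] by auto
  have K: "Kq q > 0" "Kq q < Pq q L" "Kq q < Pq q m" using Kq_facts[OF q2] by auto
  have ex: "n * L + m * ee + t * t \<le> L * L + m * u"
    unfolding L_def ee_def by (rule exp_ineq[OF t2 kn assms(5) r tn])
  have "a ^ (n * L) * a ^ (m * ee) * a ^ (t * t) \<le> a ^ (L * L) * a ^ (m * u)"
    using ex a1 by (simp add: power_add[symmetric] power_increasing)
  then have X: "a ^ (n * L) * a ^ (m * ee) \<le> (a ^ (L * L) * a ^ (m * u)) / a ^ (t * t)"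
    using a1 by (simp add: divide_simps)
  have step2: "real (T1 * CARD('a) ^ ee) / real (GT * TV)
      \<le> (a ^ (n * L) * a ^ (m * ee)) / ((a ^ (L * L) * Pq q L) * (a ^ (m * u) * Pq q m))"
  proof (rule frac_le)
    show "0 \<le> a ^ (n * L) * a ^ (m * ee)" using a1 by simp
    show "real (T1 * CARD('a) ^ ee) \<le> a ^ (n * L) * a ^ (m * ee)"
      using T1le Qe a1 by (simp add: mult_mono)
    show "0 < a ^ (L * L) * Pq q L * (a ^ (m * u) * Pq q m)" using a1 PL Pm by simp
    show "a ^ (L * L) * Pq q L * (a ^ (m * u) * Pq q m) \<le> real (GT * TV)"
      using GTr TVr a1 PL Pm by (simp add: mult_left_mono)
  qed
  also have "\<dots> \<le> (1 / a ^ (t * t)) / (Pq q L * Pq q m)"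
  proof -
    have "(a ^ (n * L) * a ^ (m * ee)) / ((a ^ (L * L) * Pq q L) * (a ^ (m * u) * Pq q m))
        = ((a ^ (n * L) * a ^ (m * ee)) / (a ^ (L * L) * a ^ (m * u))) / (Pq q L * Pq q m)"
      by (simp add: ac_simps)
    also have "\<dots> \<le> (1 / a ^ (t * t)) / (Pq q L * Pq q m)"
    proof (rule divide_right_mono)
      show "0 \<le> Pq q L * Pq q m" using PL Pm by simp
      have "a ^ (n * L) * a ^ (m * ee) \<le> (a ^ (L * L) * a ^ (m * u)) / a ^ (t * t)" by (rule X)
      then show "a ^ (n * L) * a ^ (m * ee) / (a ^ (L * L) * a ^ (m * u)) \<le> 1 / a ^ (t * t)"
        using a1 by (simp add: divide_simps mult.commute)
    qed
    finally show ?thesis .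
  qed
  also have "\<dots> < (1 / a ^ (t * t)) / (Kq q)\<^sup>2"
  proof (rule divide_strict_left_mono)
    show "(Kq q)\<^sup>2 < Pq q L * Pq q m" unfolding power2_eq_square
      using K by (simp add: mult_strict_mono)
    show "0 < 1 / a ^ (t * t)" using a1 by simp
    show "0 < Pq q L * Pq q m * (Kq q)\<^sup>2" using PL Pm K by simp
  qed
  finally have "PE F n C c t u < (1 / a ^ (t * t)) / (Kq q)\<^sup>2" using step1 by linarith
  then show ?thesis unfolding t_def a_def power2_eq_square .
qed

end
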